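(* Consider the closed-loop system described in the context, with the switching controller defined as follows: fix $\Delta_{\min}=:\Delta_0<\Delta_1<\dots<\Delta_r:=\Delta_{\max}$, set $\mathcal{E}_1:=[\Delta_0,\Delta_1]$ and $\mathcal{E}_p:=(\Delta_{p-1},\Delta_p]$ for $p=2,\dots,r$, let $K_1,\dots,K_r\in\mathbb{R}^{n_u\times n_y}$ be given, and let $u[k]=K_p\tilde y[k]$ whenever $E[k]\in\mathcal{E}_p$. Let $\sigma\in(0,1]$ and $\gamma>0$. For $\bm j=(j_1,\dots,j_{n_y})\in\mathcal{J}_{n_y}$ let $\Lambda_{\bm j}:=\mathrm{diag}(\lambda_1 j_1,\dots,\lambda_{n_y}j_{n_y})$. Suppose there exist a positive definite matrix $P\in\mathbb{R}^{n_x\times n_x}$ and, for $p=1,\dots,r$ and $\bm j\in\mathcal{J}_{n_y}$, symmetric matrices with nonnegative entries $$\begin{bmatrix} L_{p,\bm j} & N_{p,\bm j}\\ N_{p,\bm j}^{\top} & M_{p,\bm j}\end{bmatrix}\in\mathbb{R}^{2n_y\times 2n_y}\quad(L_{p,\bm j},M_{p,\bm j},N_{p,\bm j}\in\mathbb{R}^{n_y\times n_y}),$$ and symmetric matrices $Z_{p,\bm j}\in\mathbb{R}^{n_y\times n_y}$, such that for every $p=1,\dots,r$ and every $\bm j\in\mathcal{J}_{n_y}$, $$\begin{bmatrix}\Gamma_{p,\bm j} & \Phi_{p,\bm j}\\ \Phi_{p,\bm j}^{\top} & \Xi_{p,\bm j}\end{bmatrix}\succ 0,$$ where $N^+_{p,\bm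 j}:=N_{p,\bm j}+N_{p,\bm j}^{\top}$, $N^-_{p,\bm j}:=N_{p,\bm j}-N_{p,\bm j}^{\top}$, $$R_{p,\bm j}:=\begin{bmatrix} L_{p,\bm j}+M_{p,\bm j}+N^+_{p,\bm j} & L_{p,\bm j}-M_{p,\bm j}-N^-_{p,\bm j}\\ (L_{p,\bm j}-M_{p,\bm j}-N^-_{p,\bm j})^{\top} & L_{p,\bm j}+M_{p,\bm j}+Z_{p,\bm j}\end{bmatrix},$$ $\Gamma_{p,\bm j}:=\mathrm{diag}(\sigma^2P,\ \gamma^2 I_{n_w},\ N^+_{p,\bm j}+Z_{p,\bm j})$, $\Xi_{p,\bm j}:=\mathrm{diag}(P,\ I_{n_z},\ R_{p,\bm j})$, and $$\Phi_{p,\bm j}:=\begin{bmatrix} A+BK_pC & BK_pD & BK_p\\ F&0&0\\ \Delta_p\Lambda_{\bm j}C & \Delta_p\Lambda_{\bm j}D & 0\\ 0&0&I_{n_y}\end{bmatrix}^{\top}\Xi_{p,\bm j}.$$ Then: (i) the closed-loop system is practically stable with an ultimate bound of the form $\eta=\rho\cdot\max_{i=1,\dots,n_y}\big((\Delta_{\max}\lambda_i+1)\bar w\|D\|_\infty+\delta_i\big)$ for some $\rho\ge 0$, i.e., for every $\bar w\ge0$, $\|w[k]\|_\infty\le\bar w$ for all $k\in\mathbb{Z}_+$ implies $\limsup_{k\to\infty}\|x[k]\|\le\eta$; (ii) the closed-loop system has decay rate $\sigma$; and (iii) its $\ell^2$-gain from $w$ to $z$ is less than or equal to $\gamma$.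
   Context: Plant (discrete time, $k\in\mathbb{Z}_+$): $x[k+1]=Ax[k]+Bu[k]$, $y[k]=Cx[k]+Dw[k]$, $z[k]=Fx[k]$, with $x[k]\in\mathbb{R}^{n_x}$, $u[k]\in\mathbb{R}^{n_u}$, $y[k]=[y_1[k],\dots,y_{n_y}[k]]^\top\in\mathbb{R}^{n_y}$, noise $w[k]\in\mathbb{R}^{n_w}$, performance output $z[k]\in\mathbb{R}^{n_z}$. Event-triggered try-once-discard protocol: fix $\Delta_{\max}>\Delta_{\min}\ge0$, $\lambda_i>0$, $\delta_i\ge0$ ($i=1,\dots,n_y$). Let $l^i_k$ be the latest time $\le k$ at which $y_i$ was transmitted (with some stored initial released value). At each $k$, compute $e_i'[k]:=y_i[l^i_{k-1}]-y_i[k]$ and $E_i':=\frac{|e_i'[k]|-\delta_i}{\lambda_i|y_i[k]|}$ (convention: $\alpha/0=+\infty$ for $\alpha>0$, $\beta/0=-\infty$ for $\beta\le0$). Rule: if $\max_iE_i'<\Delta_{\min}$, nothing is transmitted; if $\max_iE_i'\ge\Delta_{\max}$, all $y_i[k]$ with $E_i'\ge\Delta_{\max}$ are transmitted; otherwise a single $y_i[k]$ achieving $E_i'=\max_iE_i'$ is transmitted (any one if ties). If $y_i[k]$ is transmitted then $l^i_k=k$, otherwise $l^i_k=l^i_{k-1}$. Define $E[k]:=\Delta_{\min}$ if $\max_iE_i'<\Delta_{\min}$, $E[k]:=\Delta_{\max}$ if $\max_iE_i'\ge\Delta_{\max}$, and $E[k]:=\max_iE_i'$ otherwise. Let $\tilde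 y[k]:=[y_1[l^1_k],\dots,y_{n_y}[l^{n_y}_k]]^\top$; the controller is $u[k]=K(E[k])\tilde y[k]$. Notation: $\|\cdot\|$ Euclidean norm; $\|v\|_\infty=\max_i|v_i|$ and $\|D\|_\infty$ is the induced matrix norm; $\mathcal{J}_n:=\{(j_1,\dots,j_n): j_p\in\{1,-1\}\}$; $\succ0$ means symmetric positive definite; $\ell^2$ is the space of square-summable sequences on $\mathbb{Z}_+$ with $\|v\|_{\ell^2}=(\sum_k v[k]^\top v[k])^{1/2}$. Definitions: the closed-loop system is practically stable if for every $\bar w\ge0$ there is $\eta\ge0$ with $\|w[k]\|_\infty\le\bar w\ \forall k\Rightarrow\limsup_{k\to\infty}\|x[k]\|\le\eta$. It has decay rate $\sigma$ if there is $M\ge1$ such that whenever $w[k]=0$ for all $k$ and $\delta_i=0$ for all $i$, $\|x[k]\|\le M\sigma^k\|x[0]\|$ for all $k\in\mathbb{Z}_+$. Its $\ell^2$-gain (for $w\in\ell^2$) is at most $\gamma$ if, whenever $x[0]=0$ and $\delta_i=0$ for all $i$, $z\in\ell^2$ and $\|z\|_{\ell^2}\le\gamma\|w\|_{\ell^2}$. *)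

theory Defs
  imports "Jordan_Normal_Form.Matrix" "HOL-Library.Extended_Real" "HOL-Library.Liminf_Limsup"
begin

definition sym_mat :: "real mat \<Rightarrow> bool" where
  "sym_mat M \<longleftrightarrow> dim_row M = dim_col M \<and> transpose_mat M = M"

definition pos_def :: "real mat \<Rightarrow> bool" where
  "pos_def M \<longleftrightarrow> sym_mat M \<and>
     (\<forall>v \<in> carrier_vec (dim_row M). v \<noteq> 0\<^sub>v (dim_row M) \<longrightarrow> v \<bullet> (M *\<^sub>v v) > 0)"

definition nonneg_mat :: "real mat \<Rightarrow> bool" where
  "nonneg_mat M \<longleftrightarrow> (\<forall>i < dim_row M. \<forall>j < dim_col M. M $$ (i,j) \<ge> 0)"

definition bdiag :: "real mat \<Rightarrow> real mat \<Rightarrow> real mat" where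
  "bdiag A B = four_block_mat A (0\<^sub>m (dim_row A) (dim_col B)) (0\<^sub>m (dim_row B) (dim_col A)) B"

definition hcat :: "real mat \<Rightarrow> real mat \<Rightarrow> real mat" where
  "hcat A B = mat (dim_row A) (dim_col A + dim_col B)
     (\<lambda>(i,j). if j < dim_col A then A $$ (i,j) else B $$ (i, j - dim_col A))"

definition vnorm :: "real vec \<Rightarrow> real" where
  "vnorm v = sqrt (\<Sum>i<dim_vec v. (v $ i)^2)"

definition vinf :: "real vec \<Rightarrow> real" where
  "vinf v = Max (insert 0 {\<bar>v $ i\<bar> | i. i < dim_vec v})"

definition minf :: "real mat \<Rightarrow> real" where
  "minf D = Sup {vinf (D *\<^sub>v v) | v. v \<in> carrier_vec (dim_col D) \<and> vinf v \<le> 1}"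

definition l2norm :: "(nat \<Rightarrow> real vec) \<Rightarrow> real" where
  "l2norm f = sqrt (\<Sum>k. (vnorm (f k))^2)"

definition in_l2 :: "(nat \<Rightarrow> real vec) \<Rightarrow> bool" where
  "in_l2 f \<longleftrightarrow> summable (\<lambda>k. (vnorm (f k))^2)"

text \<open>E'_i = (|e| - delta)/(lambda |y|), with alpha/0 = +inf for alpha > 0, -inf for alpha <= 0.\<close>
definition Eprime :: "real \<Rightarrow> real \<Rightarrow> real \<Rightarrow> real \<Rightarrow> ereal" where
  "Eprime e del lam y =
     (if y = 0 then (if \<bar>e\<bar> - del > 0 then \<infinity> else -\<infinity>)
      else ereal ((\<bar>e\<bar> - del) / (lam * \<bar>y\<bar>)))"

text \<open>One step of the try-once-discard protocol: given the previously held values yp,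
  the current output y, it relates the new held values yn and the value E[k].\<close>
definition protocol_step ::
  "nat \<Rightarrow> (nat \<Rightarrow> real) \<Rightarrow> (nat \<Rightarrow> real) \<Rightarrow> real \<Rightarrow> real \<Rightarrow>
   real vec \<Rightarrow> real vec \<Rightarrow> real vec \<Rightarrow> real \<Rightarrow> bool" where
  "protocol_step ny lam del dmin dmax yp y yn E \<longleftrightarrow>
     (let Ep = (\<lambda>i. Eprime (yp $ i - y $ i) (del i) (lam i) (y $ i));
          m = Max (Ep ` {..<ny})
      in \<exists>T \<subseteq> {..<ny}.
           (if m < ereal dmin then T = {} \<and> E = dmin
            else if m \<ge> ereal dmax then T = {i \<in> {..<ny}. Ep i \<ge> ereal dmax} \<and> E = dmax
            else (\<exists>i0 < ny. Ep i0 = m \<and> T = {i0}) \<and> E = real_of_ereal m)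
           \<and> yn = vec ny (\<lambda>i. if i \<in> T then y $ i else yp $ i))"

definition Eint :: "(nat \<Rightarrow> real) \<Rightarrow> nat \<Rightarrow> real set" where
  "Eint Dl p = (if p = 1 then {Dl 0 .. Dl 1} else {Dl (p - 1) <.. Dl p})"

text \<open>Closed-loop trajectory: state x, input u, noise w, held outputs yh (= tilde y),
  initial stored released values yinit, and the signal E.\<close>
definition cl_traj ::
  "nat \<Rightarrow> nat \<Rightarrow> nat \<Rightarrow> nat \<Rightarrow> real mat \<Rightarrow> real mat \<Rightarrow> real mat \<Rightarrow> real mat \<Rightarrow>
   (nat \<Rightarrow> real) \<Rightarrow> nat \<Rightarrow> (nat \<Rightarrow> real mat) \<Rightarrow> (nat \<Rightarrow> real) \<Rightarrow> (nat \<Rightarrow> real) \<Rightarrow>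
   (nat \<Rightarrow> real vec) \<Rightarrow> real vec \<Rightarrow> (nat \<Rightarrow> real vec) \<Rightarrow> (nat \<Rightarrow> real vec) \<Rightarrow>
   (nat \<Rightarrow> real vec) \<Rightarrow> (nat \<Rightarrow> real) \<Rightarrow> bool" where
  "cl_traj nx nu ny nw A B C D Dl r K lam del w yinit x u yh Ev \<longleftrightarrow>
     yinit \<in> carrier_vec ny \<and>
     (\<forall>k. w k \<in> carrier_vec nw \<and> x k \<in> carrier_vec nx \<and> u k \<in> carrier_vec nu
          \<and> yh k \<in> carrier_vec ny) \<and>
     (\<forall>k. x (Suc k) = A *\<^sub>v x k + B *\<^sub>v u k) \<and>
     (\<forall>k. protocol_step ny lam del (Dl 0) (Dl r)
            (if k = 0 then yinit else yh (k - 1)) (C *\<^sub>v x k + D *\<^sub>v w k) (yh k) (Ev k)) \<and>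
     (\<forall>k p. 1 \<le> p \<and> p \<le> r \<and> Ev k \<in> Eint Dl p \<longrightarrow> u k = K p *\<^sub>v yh k)"

definition Jset :: "nat \<Rightarrow> real list set" where
  "Jset n = {j. length j = n \<and> set j \<subseteq> {1, -1}}"

definition Lam :: "nat \<Rightarrow> (nat \<Rightarrow> real) \<Rightarrow> real list \<Rightarrow> real mat" where
  "Lam ny lam j = mat ny ny (\<lambda>(i,i'). if i = i' then lam i * j ! i else 0)"

definition LMI_mat ::
  "nat \<Rightarrow> nat \<Rightarrow> nat \<Rightarrow> nat \<Rightarrow> nat \<Rightarrow>
   real mat \<Rightarrow> real mat \<Rightarrow> real mat \<Rightarrow> real mat \<Rightarrow> real mat \<Rightarrow> real mat \<Rightarrow>
   real \<Rightarrow> real mat \<Rightarrow> real \<Rightarrow> real \<Rightarrow> real mat \<Rightarrow>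
   real mat \<Rightarrow> real mat \<Rightarrow> real mat \<Rightarrow> real mat \<Rightarrow> real mat" where
  "LMI_mat nx nu ny nw nz A B C D F Kp Dp Lj sigma gamma P L M N Z =
     (let Np = N + transpose_mat N; Nm = N - transpose_mat N;
          R = four_block_mat (L + M + Np) (L - M - Nm) (transpose_mat (L - M - Nm)) (L + M + Z);
          Gam = bdiag ((sigma^2) \<cdot>\<^sub>m P) (bdiag ((gamma^2) \<cdot>\<^sub>m 1\<^sub>m nw) (Np + Z));
          Xi = bdiag P (bdiag (1\<^sub>m nz) R);
          G = hcat (hcat (A + B * Kp * C) (B * Kp * D)) (B * Kp)
              @\<^sub>r hcat (hcat F (0\<^sub>m nz nw)) (0\<^sub>m nz ny)
              @\<^sub>r hcat (hcat (Dp \<cdot>\<^sub>m (Lj * C)) (Dp \<cdot>\<^sub>m (Lj * D))) (0\<^sub>m ny ny)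
              @\<^sub>r hcat (hcat (0\<^sub>m ny nx) (0\<^sub>m ny nw)) (1\<^sub>m ny);
          Phi = transpose_mat G * Xi
      in four_block_mat Gam Phi (transpose_mat Phi) Xi)"

end

theory Submission
  imports Defs "HOL-Analysis.L2_Norm"
begin

definition Qf :: "nat \<Rightarrow> (nat \<Rightarrow> nat \<Rightarrow> real) \<Rightarrow> (nat \<Rightarrow> real) \<Rightarrow> real" where
  "Qf n P x = (\<Sum>i<n. \<Sum>j<n. P i j * x i * x j)"

lemma Qf_Suc:
  assumes sym: "\<forall>i<Suc n. \<forall>j<Suc n. P i j = P j i"
  shows "Qf (Suc n) P x = Qf n P x + 2 * x n * (\<Sum>i<n. P n i * x i) + P n n * (x n)^2"
proof -
  have "Qf (Suc n) P x = (\<Sum>i<n. (\<Sum>j<n. P i j * x i * x j) + P i n * x i * x n)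
      + ((\<Sum>j<n. P n j * x n * x j) + P n n * x n * x n)"
    unfolding Qf_def by simp
  also have "\<dots> = Qf n P x + (\<Sum>i<n. P i n * x i * x n) + (\<Sum>j<n. P n j * x n * x j) + P n n * x n * x n"
    unfolding Qf_def by (simp add: sum.distrib)
  also have "(\<Sum>i<n. P i n * x i * x n) = x n * (\<Sum>i<n. P n i * x i)"
    unfolding sum_distrib_left using sym by (intro sum.cong) auto
  also have "(\<Sum>j<n. P n j * x n * x j) = x n * (\<Sum>i<n. P n i * x i)"
    unfolding sum_distrib_left by (intro sum.cong) auto
  finally show ?thesis by (simp add: power2_eq_square algebra_simps)
qed

lemma Qf_cong: "(\<And>i. i < n \<Longrightarrow> x i = y i) \<Longrightarrow> Qf n P x = Qf n P y"
  unfolding Qf_def by (intro sum.cong) auto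

lemma sq_sum_le: "(\<Sum>i<n. a i * (x i::real))^2 \<le> (\<Sum>i<n. (a i)^2) * (\<Sum>i<n. (x i)^2)"
proof -
  have "\<bar>\<Sum>i<n. a i * x i\<bar> \<le> (\<Sum>i<n. \<bar>a i\<bar> * \<bar>x i\<bar>)"
    by (rule order_trans[OF sum_abs]) (simp add: abs_mult)
  also have "\<dots> \<le> L2_set a {..<n} * L2_set x {..<n}" by (rule L2_set_mult_ineq)
  finally have "(\<Sum>i<n. a i * x i)^2 \<le> (L2_set a {..<n} * L2_set x {..<n})^2"
    by (metis abs_ge_zero power2_abs power_mono)
  also have "\<dots> = (\<Sum>i<n. (a i)^2) * (\<Sum>i<n. (x i)^2)"
    unfolding L2_set_def power_mult_distrib by (simp add: sum_nonneg)
  finally show ?thesis .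
qed

lemma Qf_coercive:
  assumes "\<forall>i<n. \<forall>j<n. P i j = P j i"
    and "\<forall>x. (\<exists>i<n. x i \<noteq> 0) \<longrightarrow> Qf n P x > 0"
  shows "\<exists>c>0. \<forall>x. c * (\<Sum>i<n. (x i)^2) \<le> Qf n P x"
  using assms
proof (induction n arbitrary: P)
  case 0
  then show ?case by (intro exI[of _ 1]) (simp add: Qf_def)
next
  case (Suc n)
  note sym = Suc.prems(1)
  define a where "a = P n n"
  have this_prev: "Qf (Suc n) P (\<lambda>i. if i = n then 1 else 0) > 0"
    using Suc.prems(2)[rule_format, of "\<lambda>i. if i = n then 1 else 0"] by auto
  define b where "b = (\<lambda>x. \<Sum>i<n. P n i * x i)"
  from this_prev have apos: "a > 0" unfolding a_def using Qf_Suc[OF sym, of "\<lambda>i. if i = n then 1 else 0"]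
    by (simp add: Qf_def)
  have eqS: "Qf (Suc n) P y = Qf n P y + 2 * y n * b y + a * (y n)^2" for y
    using Qf_Suc[OF sym, of y] unfolding a_def b_def by simp
  define ia where "ia = 1 / a"
  have aia: "a * ia = 1" using apos unfolding ia_def by simp
  define P' where "P' = (\<lambda>i j. P i j - P n i * P n j * ia)"
  have QP': "Qf n P' x = Qf n P x - (b x)^2 * ia" for x
  proof -
    have "Qf n P' x = (\<Sum>i<n. \<Sum>j<n. P i j * x i * x j - ((P n i * x i) * (P n j * x j)) * ia)"
      unfolding Qf_def P'_def by (intro sum.cong refl) (simp add: algebra_simps)
    also have "\<dots> = Qf n P x - (\<Sum>i<n. \<Sum>j<n. ((P n i * x i) * (P n j * x j)) * ia)"
      unfolding Qf_def by (simp add: sum_subtractf)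
    also have "(\<Sum>i<n. \<Sum>j<n. ((P n i * x i) * (P n j * x j)) * ia) = (b x)^2 * ia"
    proof -
      have "(b x)^2 = (\<Sum>i<n. \<Sum>j<n. (P n i * x i) * (P n j * x j))"
        unfolding b_def power2_eq_square by (rule sum_product)
      thus ?thesis by (simp add: sum_distrib_right)
    qed
    finally show ?thesis .
  qed
  have sym': "\<forall>i<n. \<forall>j<n. P' i j = P' j i" using sym unfolding P'_def by (auto simp: mult.commute)
  have pos': "\<forall>x. (\<exists>i<n. x i \<noteq> 0) \<longrightarrow> Qf n P' x > 0"
  proof (intro allI impI)
    fix x :: "nat \<Rightarrow> real" assume ex: "\<exists>i<n. x i \<noteq> 0"
    define x' where "x' = x(n := - b x / a)"
    obtain i where i: "i < n" "x i \<noteq> 0" using ex by blast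
    have "\<exists>i<Suc n. x' i \<noteq> 0" using i unfolding x'_def by (intro exI[of _ i]) auto
    hence "Qf (Suc n) P x' > 0" using Suc.prems(2) by blast
    moreover have "Qf n P x' = Qf n P x" by (rule Qf_cong) (simp add: x'_def)
    moreover have "b x' = b x" unfolding b_def x'_def by (intro sum.cong) auto
    ultimately have "0 < Qf n P x + 2 * (- b x / a) * b x + a * (- b x / a)^2"
      using eqS[of x'] by (simp add: x'_def)
    also have "\<dots> = Qf n P x - (b x)^2 * ia" using apos unfolding ia_def by (simp add: field_simps power2_eq_square)
    finally show "Qf n P' x > 0" using QP' by simp
  qed
  obtain c' where c': "c' > 0" "\<forall>x. c' * (\<Sum>i<n. (x i)^2) \<le> Qf n P' x"
    using Suc.IH[OF sym' pos'] by blast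
  define K where "K = (\<Sum>i<n. (P n i)^2)"
  have K0: "K \<ge> 0" unfolding K_def by (simp add: sum_nonneg)
  define c where "c = min (a/2) (c' / (1 + 2*K/a^2))"
  have d0: "1 + 2*K/a^2 > 0" using K0 apos by (simp add: add_pos_nonneg)
  have cpos: "c > 0" unfolding c_def using apos c' d0 by simp
  show ?case
  proof (intro exI[of _ c] conjI allI cpos)
    fix x :: "nat \<Rightarrow> real"
    define t where "t = x n + b x / a"
    define S where "S = (\<Sum>i<n. (x i)^2)"
    have S0: "S \<ge> 0" unfolding S_def by (simp add: sum_nonneg)
    have Q: "Qf (Suc n) P x = a * t^2 + Qf n P' x"
    proof -
      have "a * t^2 = a * (x n)^2 + 2 * x n * b x + (b x)^2 * ia" unfolding t_def ia_def
        using apos by (simp add: field_simps power2_eq_square)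
      thus ?thesis using eqS[of x] QP'[of x] by linarith
    qed
    have bb: "(b x)^2 \<le> K * S" unfolding b_def K_def S_def by (rule sq_sum_le)
    have xn: "(x n)^2 \<le> 2 * t^2 + 2 * (b x)^2 / a^2"
    proof -
      define u where "u = b x / a"
      have "x n = t - u" unfolding t_def u_def by simp
      moreover have "(t - u)^2 \<le> 2 * t^2 + 2 * u^2"
        using zero_le_power2[of "t + u"] by (simp add: power2_diff power2_sum)
      moreover have "u^2 = (b x)^2 / a^2" unfolding u_def by (simp add: power_divide)
      ultimately show ?thesis by simp
    qed
    have "(\<Sum>i<Suc n. (x i)^2) = S + (x n)^2" unfolding S_def by simp
    also have "\<dots> \<le> 2 * t^2 + (1 + 2*K/a^2) * S"
    proof -
      have "2 * (b x)^2 / a^2 \<le> 2 * (K * S) / a^2"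
        using bb apos by (simp add: divide_right_mono)
      thus ?thesis using xn by (simp add: algebra_simps)
    qed
    finally have sumle: "(\<Sum>i<Suc n. (x i)^2) \<le> 2 * t^2 + (1 + 2*K/a^2) * S" .
    have "c * (\<Sum>i<Suc n. (x i)^2) \<le> c * (2 * t^2 + (1 + 2*K/a^2) * S)"
      using sumle cpos by (simp add: mult_left_mono)
    also have "\<dots> = (2 * c) * t^2 + (c * (1 + 2*K/a^2)) * S" by (simp add: algebra_simps)
    also have "\<dots> \<le> a * t^2 + c' * S"
    proof (rule add_mono)
      show "(2 * c) * t^2 \<le> a * t^2" using c_def by (intro mult_right_mono) auto
      have "c * (1 + 2*K/a^2) \<le> c'" unfolding c_def using d0
        by (metis min.cobounded2 mult.commute pos_le_divide_eq)
      thus "(c * (1 + 2*K/a^2)) * S \<le> c' * S" using S0 by (intro mult_right_mono)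
    qed
    also have "\<dots> \<le> Qf (Suc n) P x" using Q c'(2)[rule_format, of x] unfolding S_def by simp
    finally show "c * (\<Sum>i<Suc n. (x i)^2) \<le> Qf (Suc n) P x" .
  qed
qed

lemma mult_mat_vec_uminus:
  fixes A :: "real mat"
  assumes A: "A \<in> carrier_mat n m" and v: "v \<in> carrier_vec m"
  shows "A *\<^sub>v (- v) = - (A *\<^sub>v v)"
proof (intro eq_vecI)
  fix i assume "i < dim_vec (- (A *\<^sub>v v))"
  hence i: "i < n" using A by auto
  have dd: "dim_vec (row A i) = dim_vec v" using A v by auto
  show "(A *\<^sub>v (- v)) $ i = (- (A *\<^sub>v v)) $ i" using i A by (simp add: scalar_prod_uminus_right[OF dd])
qed (insert A, auto)

lemma zero_mult_mat_vec[simp]: "v \<in> carrier_vec m \<Longrightarrow> 0\<^sub>m n m *\<^sub>v v = 0\<^sub>v n"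
  by (intro eq_vecI) (auto simp: scalar_prod_def)

lemma hcat_carrier[simp,intro]: "A \<in> carrier_mat n m1 \<Longrightarrow> B \<in> carrier_mat n m2 \<Longrightarrow> hcat A B \<in> carrier_mat n (m1 + m2)"
  unfolding hcat_def by auto

lemma hcat_mult_vec:
  assumes A: "A \<in> carrier_mat n m1" and B: "B \<in> carrier_mat n m2"
    and a: "a \<in> carrier_vec m1" and b: "b \<in> carrier_vec m2"
  shows "hcat A B *\<^sub>v (a @\<^sub>v b) = A *\<^sub>v a + B *\<^sub>v b"
proof (intro eq_vecI)
  fix i assume "i < dim_vec (A *\<^sub>v a + B *\<^sub>v b)"
  hence i: "i < n" using A B by auto
  have r: "row (hcat A B) i = row A i @\<^sub>v row B i"
    using A B i by (intro eq_vecI) (auto simp: hcat_def)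
  show "(hcat A B *\<^sub>v (a @\<^sub>v b)) $ i = (A *\<^sub>v a + B *\<^sub>v b) $ i"
    using i A B a b r by (auto simp: hcat_def scalar_prod_append[of _ m1 _ m2])
qed (insert A B, auto simp: hcat_def)

lemma bdiag_carrier[simp,intro]: "A \<in> carrier_mat n n \<Longrightarrow> B \<in> carrier_mat m m \<Longrightarrow> bdiag A B \<in> carrier_mat (n + m) (n + m)"
  unfolding bdiag_def by auto

lemma four_block_qf:
  fixes A B C D :: "real mat"
  assumes A: "A \<in> carrier_mat n1 n1" and B: "B \<in> carrier_mat n1 n2"
    and C: "C \<in> carrier_mat n2 n1" and D: "D \<in> carrier_mat n2 n2"
    and a: "a \<in> carrier_vec n1" and b: "b \<in> carrier_vec n2"
  shows "(a @\<^sub>v b) \<bullet> (four_block_mat A B C D *\<^sub>v (a @\<^sub>v b))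
       = a \<bullet> (A *\<^sub>v a) + a \<bullet> (B *\<^sub>v b) + b \<bullet> (C *\<^sub>v a) + b \<bullet> (D *\<^sub>v b)"
  using A B C D a b
  by (simp add: four_block_mat_mult_vec[OF A B C D a b] scalar_prod_append[of _ n1 _ n2]
      scalar_prod_add_distrib[of _ n1] scalar_prod_add_distrib[of _ n2] add.assoc)

lemma bdiag_qf:
  assumes A: "A \<in> carrier_mat n1 n1" and D: "D \<in> carrier_mat n2 n2"
    and a: "a \<in> carrier_vec n1" and b: "b \<in> carrier_vec n2"
  shows "(a @\<^sub>v b) \<bullet> (bdiag A D *\<^sub>v (a @\<^sub>v b)) = a \<bullet> (A *\<^sub>v a) + b \<bullet> (D *\<^sub>v b)"
  unfolding bdiag_def using A D a b
  by (subst four_block_qf[OF A _ _ D a b]) auto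

lemma LMI_expand:
  fixes Gam Xi G :: "real mat"
  assumes Gam: "Gam \<in> carrier_mat n1 n1" and Xi: "Xi \<in> carrier_mat n2 n2"
    and G: "G \<in> carrier_mat n2 n1" and v: "v \<in> carrier_vec n1"
  shows "(v @\<^sub>v (- (G *\<^sub>v v))) \<bullet> (four_block_mat Gam (transpose_mat G * Xi) (transpose_mat (transpose_mat G * Xi)) Xi
            *\<^sub>v (v @\<^sub>v (- (G *\<^sub>v v))))
       = v \<bullet> (Gam *\<^sub>v v) - (G *\<^sub>v v) \<bullet> (Xi *\<^sub>v (G *\<^sub>v v))"
proof -
  define g where "g = G *\<^sub>v v"
  have g: "g \<in> carrier_vec n2" unfolding g_def using G v by auto
  have Phi: "transpose_mat G * Xi \<in> carrier_mat n1 n2" using G Xi by auto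
  have Phit: "transpose_mat (transpose_mat G * Xi) \<in> carrier_mat n2 n1" using G Xi by auto
  have mg: "- g \<in> carrier_vec n2" using g by auto
  have e1: "v \<bullet> ((transpose_mat G * Xi) *\<^sub>v (- g)) = - (g \<bullet> (Xi *\<^sub>v g))"
  proof -
    have eq: "(transpose_mat G * Xi) *\<^sub>v (- g) = - (transpose_mat G *\<^sub>v (Xi *\<^sub>v g))"
      using G Xi g by (simp add: mult_mat_vec_uminus[OF Phi g])
    have dd: "dim_vec v = dim_vec (transpose_mat G *\<^sub>v (Xi *\<^sub>v g))" using G v by simp
    have "v \<bullet> ((transpose_mat G * Xi) *\<^sub>v (- g)) = - (v \<bullet> (transpose_mat G *\<^sub>v (Xi *\<^sub>v g)))"
      unfolding eq by (rule scalar_prod_uminus_right[OF dd])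
    also have "v \<bullet> (transpose_mat G *\<^sub>v (Xi *\<^sub>v g)) = (transpose_mat G *\<^sub>v (Xi *\<^sub>v g)) \<bullet> v"
      using G Xi g v by (intro comm_scalar_prod[of _ n1]) auto
    also have "\<dots> = (Xi *\<^sub>v g) \<bullet> g"
      unfolding g_def using G Xi v by (intro transpose_vec_mult_scalar[OF G v]) auto
    also have "\<dots> = g \<bullet> (Xi *\<^sub>v g)" using Xi g by (intro comm_scalar_prod[of _ n2]) auto
    finally show ?thesis .
  qed
  have e2: "(- g) \<bullet> (transpose_mat (transpose_mat G * Xi) *\<^sub>v v) = - (g \<bullet> (Xi *\<^sub>v g))"
  proof -
    have dd: "dim_vec g = dim_vec (transpose_mat (transpose_mat G * Xi) *\<^sub>v v)" using g Xi v by simp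
    have "(- g) \<bullet> (transpose_mat (transpose_mat G * Xi) *\<^sub>v v) = - (g \<bullet> (transpose_mat (transpose_mat G * Xi) *\<^sub>v v))"
      by (rule scalar_prod_uminus_left[OF dd])
    also have "g \<bullet> (transpose_mat (transpose_mat G * Xi) *\<^sub>v v) = (transpose_mat (transpose_mat G * Xi) *\<^sub>v v) \<bullet> g"
      using g Phit v by (intro comm_scalar_prod[of _ n2]) auto
    also have "\<dots> = v \<bullet> ((transpose_mat G * Xi) *\<^sub>v g)"
      by (rule transpose_vec_mult_scalar[OF Phi g v])
    also have "\<dots> = v \<bullet> (transpose_mat G *\<^sub>v (Xi *\<^sub>v g))" using G Xi g by simp
    also have "\<dots> = (transpose_mat G *\<^sub>v (Xi *\<^sub>v g)) \<bullet> v"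
      using G Xi g v by (intro comm_scalar_prod[of _ n1]) auto
    also have "\<dots> = (Xi *\<^sub>v g) \<bullet> g"
      unfolding g_def using G Xi v by (intro transpose_vec_mult_scalar[OF G v]) auto
    also have "\<dots> = g \<bullet> (Xi *\<^sub>v g)" using Xi g by (intro comm_scalar_prod[of _ n2]) auto
    finally show ?thesis .
  qed
  have e3: "(- g) \<bullet> (Xi *\<^sub>v (- g)) = g \<bullet> (Xi *\<^sub>v g)"
    using Xi g by (simp add: mult_mat_vec_uminus[OF Xi g])
  show ?thesis
    unfolding g_def[symmetric]
    by (subst four_block_qf[OF Gam Phi Phit Xi v mg]) (simp add: e1 e2 e3)
qed

lemma append_vec_assoc: "(a @\<^sub>v b) @\<^sub>v c = a @\<^sub>v (b @\<^sub>v c)"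
  by (intro eq_vecI) (auto simp: nth_append)

lemma smult_mat_mult_vec: "X \<in> carrier_mat n m \<Longrightarrow> v \<in> carrier_vec m \<Longrightarrow> (c \<cdot>\<^sub>m X) *\<^sub>v v = c \<cdot>\<^sub>v (X *\<^sub>v (v :: real vec))"
  by (intro eq_vecI) (auto simp: scalar_prod_def sum_distrib_left mult.assoc)

lemma mv_index: "X \<in> carrier_mat n m \<Longrightarrow> v \<in> carrier_vec m \<Longrightarrow> i < n \<Longrightarrow> (X *\<^sub>v v) $ i = (\<Sum>j<m. X $$ (i,j) * v $ j)"
  by (auto simp: scalar_prod_def atLeast0LessThan)

lemma bf_sum:
  fixes X :: "real mat"
  assumes X: "X \<in> carrier_mat n m" and u: "u \<in> carrier_vec n" and w: "w \<in> carrier_vec m"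
  shows "u \<bullet> (X *\<^sub>v w) = (\<Sum>i<n. \<Sum>j<m. u $ i * X $$ (i,j) * w $ j)"
proof -
  have "u \<bullet> (X *\<^sub>v w) = (\<Sum>i<n. u $ i * (X *\<^sub>v w) $ i)"
    using u X by (simp add: scalar_prod_def atLeast0LessThan)
  also have "\<dots> = (\<Sum>i<n. \<Sum>j<m. u $ i * X $$ (i,j) * w $ j)"
    by (intro sum.cong refl) (simp add: mv_index[OF X w] sum_distrib_left mult.assoc)
  finally show ?thesis .
qed

lemma Lam_mult_vec:
  assumes u: "u \<in> carrier_vec ny" and i: "i < ny"
  shows "(Lam ny lam j *\<^sub>v u) $ i = lam i * j ! i * u $ i"
proof -
  have "(Lam ny lam j *\<^sub>v u) $ i = (\<Sum>k<ny. (if i = k then lam i * j ! i else 0) * u $ k)"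
    by (subst mv_index[OF _ u i]) (insert i, auto simp: Lam_def intro!: sum.cong)
  also have "\<dots> = (\<Sum>k<ny. if k = i then lam i * j ! i * u $ i else 0)"
    by (intro sum.cong) auto
  also have "\<dots> = lam i * j ! i * u $ i" using i by simp
  finally show ?thesis .
qed

lemma bf5:
  fixes X1 X2 X3 X4 X5 :: "real mat"
  assumes "X1 \<in> carrier_mat n n" "X2 \<in> carrier_mat n n" "X3 \<in> carrier_mat n n"
    "X4 \<in> carrier_mat n n" "X5 \<in> carrier_mat n n"
    and s: "s \<in> carrier_vec n" and e: "e \<in> carrier_vec n"
  shows "s \<bullet> (X1 *\<^sub>v s) + s \<bullet> (X2 *\<^sub>v e) + e \<bullet> (X3 *\<^sub>v s) + e \<bullet> (X4 *\<^sub>v e) - e \<bullet> (X5 *\<^sub>v e)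
    = (\<Sum>i<n. \<Sum>j<n. s$i * X1$$(i,j) * s$j + s$i * X2$$(i,j) * e$j + e$i * X3$$(i,j) * s$j
          + e$i * X4$$(i,j) * e$j - e$i * X5$$(i,j) * e$j)"
  using assms by (simp add: bf_sum sum.distrib sum_subtractf)

lemma step_core:
  fixes A B C D F P Kp L M N Z :: "real mat" and lam :: "nat \<Rightarrow> real" and j :: "real list"
    and x w e :: "real vec"
  assumes A: "A \<in> carrier_mat nx nx" and B: "B \<in> carrier_mat nx nu"
    and C: "C \<in> carrier_mat ny nx" and D: "D \<in> carrier_mat ny nw"
    and F: "F \<in> carrier_mat nz nx" and P: "P \<in> carrier_mat nx nx"
    and Kp: "Kp \<in> carrier_mat nu ny"
    and L: "L \<in> carrier_mat ny ny" and M: "M \<in> carrier_mat ny ny"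
    and N: "N \<in> carrier_mat ny ny" and Z: "Z \<in> carrier_mat ny ny"
    and symm: "sym_mat (four_block_mat L N (transpose_mat N) M)"
    and nonneg: "nonneg_mat (four_block_mat L N (transpose_mat N) M)"
    and Dp: "0 \<le> Dp"
    and coer: "\<forall>vv \<in> carrier_vec (dim_row (LMI_mat nx nu ny nw nz A B C D F Kp Dp (Lam ny lam j) sigma gamma P L M N Z)).
        c * (vv \<bullet> vv) \<le> vv \<bullet> (LMI_mat nx nu ny nw nz A B C D F Kp Dp (Lam ny lam j) sigma gamma P L M N Z *\<^sub>v vv)"
    and c: "0 \<le> c"
    and x: "x \<in> carrier_vec nx" and w: "w \<in> carrier_vec nw" and e: "e \<in> carrier_vec ny"
    and sgn: "\<forall>i<ny. j ! i * (C *\<^sub>v x + D *\<^sub>v w) $ i = \<bar>(C *\<^sub>v x + D *\<^sub>v w) $ i\<bar>"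
    and sector: "\<forall>i<ny. \<bar>e $ i\<bar> \<le> Dp * lam i * \<bar>(C *\<^sub>v x + D *\<^sub>v w) $ i\<bar>"
  shows "((A + B * Kp * C) *\<^sub>v x + (B * Kp * D) *\<^sub>v w + (B * Kp) *\<^sub>v e) \<bullet>
           (P *\<^sub>v ((A + B * Kp * C) *\<^sub>v x + (B * Kp * D) *\<^sub>v w + (B * Kp) *\<^sub>v e))
         + (F *\<^sub>v x) \<bullet> (F *\<^sub>v x) + c * (x \<bullet> x)
       \<le> sigma^2 * (x \<bullet> (P *\<^sub>v x)) + gamma^2 * (w \<bullet> w)"
proof -
  define Lj where "Lj = Lam ny lam j"
  have Lj: "Lj \<in> carrier_mat ny ny" unfolding Lj_def Lam_def by auto
  define Np where "Np = N + transpose_mat N"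
  define Nm where "Nm = N - transpose_mat N"
  define R where "R = four_block_mat (L + M + Np) (L - M - Nm) (transpose_mat (L - M - Nm)) (L + M + Z)"
  define Gam where "Gam = bdiag ((sigma^2) \<cdot>\<^sub>m P) (bdiag ((gamma^2) \<cdot>\<^sub>m 1\<^sub>m nw) (Np + Z))"
  define Xi where "Xi = bdiag P (bdiag (1\<^sub>m nz) R)"
  define X1 where "X1 = A + B * Kp * C"
  define Y1 where "Y1 = B * Kp * D"
  define Z1 where "Z1 = B * Kp"
  define X3 where "X3 = Dp \<cdot>\<^sub>m (Lj * C)"
  define Y3 where "Y3 = Dp \<cdot>\<^sub>m (Lj * D)"
  define G where "G = hcat (hcat X1 Y1) Z1
              @\<^sub>r hcat (hcat F (0\<^sub>m nz nw)) (0\<^sub>m nz ny)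
              @\<^sub>r hcat (hcat X3 Y3) (0\<^sub>m ny ny)
              @\<^sub>r hcat (hcat (0\<^sub>m ny nx) (0\<^sub>m ny nw)) (1\<^sub>m ny)"
  have Wdef: "LMI_mat nx nu ny nw nz A B C D F Kp Dp (Lam ny lam j) sigma gamma P L M N Z
      = four_block_mat Gam (transpose_mat G * Xi) (transpose_mat (transpose_mat G * Xi)) Xi"
    unfolding LMI_mat_def Let_def Np_def Nm_def R_def Gam_def Xi_def G_def X1_def Y1_def Z1_def
      X3_def Y3_def Lj_def ..
  have Np: "Np \<in> carrier_mat ny ny" unfolding Np_def using N by auto
  have Nm: "Nm \<in> carrier_mat ny ny" unfolding Nm_def using N by auto
  have R: "R \<in> carrier_mat (ny + ny) (ny + ny)" unfolding R_def using L M Z Np Nm by auto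
  have Gam: "Gam \<in> carrier_mat (nx + (nw + ny)) (nx + (nw + ny))" unfolding Gam_def
    using P Np Z by (intro bdiag_carrier) auto
  have Xi: "Xi \<in> carrier_mat (nx + (nz + (ny + ny))) (nx + (nz + (ny + ny)))" unfolding Xi_def
    using P R by (intro bdiag_carrier) auto
  have X1: "X1 \<in> carrier_mat nx nx" unfolding X1_def using A B C Kp by auto
  have Y1: "Y1 \<in> carrier_mat nx nw" unfolding Y1_def using B D Kp by auto
  have Z1: "Z1 \<in> carrier_mat nx ny" unfolding Z1_def using B Kp by auto
  have X3: "X3 \<in> carrier_mat ny nx" unfolding X3_def using Lj C by auto
  have Y3: "Y3 \<in> carrier_mat ny nw" unfolding Y3_def using Lj D by auto
  have nn: "nx + nw + ny = nx + (nw + ny)" by simp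
  have R1: "hcat (hcat X1 Y1) Z1 \<in> carrier_mat nx (nx + (nw + ny))"
    using X1 Y1 Z1 by (metis hcat_carrier nn)
  have R2: "hcat (hcat F (0\<^sub>m nz nw)) (0\<^sub>m nz ny) \<in> carrier_mat nz (nx + (nw + ny))"
    using F by (metis hcat_carrier nn zero_carrier_mat)
  have R3: "hcat (hcat X3 Y3) (0\<^sub>m ny ny) \<in> carrier_mat ny (nx + (nw + ny))"
    using X3 Y3 by (metis hcat_carrier nn zero_carrier_mat)
  have R4: "hcat (hcat (0\<^sub>m ny nx) (0\<^sub>m ny nw)) (1\<^sub>m ny) \<in> carrier_mat ny (nx + (nw + ny))"
    by (metis hcat_carrier nn zero_carrier_mat one_carrier_mat)
  have G: "G \<in> carrier_mat (nx + (nz + (ny + ny))) (nx + (nw + ny))"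
    unfolding G_def using R1 R2 R3 R4 by (intro carrier_append_rows)+
  define v where "v = x @\<^sub>v (w @\<^sub>v e)"
  have v: "v \<in> carrier_vec (nx + (nw + ny))" unfolding v_def using x w e by auto
  have v2: "v = (x @\<^sub>v w) @\<^sub>v e" unfolding v_def by (simp add: append_vec_assoc)
  have xw: "x @\<^sub>v w \<in> carrier_vec (nx + nw)" using x w by auto
  define xp where "xp = X1 *\<^sub>v x + Y1 *\<^sub>v w + Z1 *\<^sub>v e"
  define s where "s = X3 *\<^sub>v x + Y3 *\<^sub>v w"
  have xp: "xp \<in> carrier_vec nx" unfolding xp_def using X1 Y1 Z1 x w e by auto
  have s: "s \<in> carrier_vec ny" unfolding s_def using X3 Y3 x w by auto
  have Fx: "F *\<^sub>v x \<in> carrier_vec nz" using F x by auto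
  have hm: "hcat (hcat X Y) Zz *\<^sub>v v = X *\<^sub>v x + Y *\<^sub>v w + Zz *\<^sub>v e"
    if "X \<in> carrier_mat n nx" "Y \<in> carrier_mat n nw" "Zz \<in> carrier_mat n ny" for X Y Zz n
    unfolding v2 using that x w e
    by (subst hcat_mult_vec[OF hcat_carrier[OF that(1,2)] that(3) xw e],
        subst hcat_mult_vec[OF that(1,2) x w], simp)
  have g: "G *\<^sub>v v = xp @\<^sub>v ((F *\<^sub>v x) @\<^sub>v (s @\<^sub>v e))"
  proof -
    have "G *\<^sub>v v = (hcat (hcat X1 Y1) Z1 *\<^sub>v v) @\<^sub>v (hcat (hcat F (0\<^sub>m nz nw)) (0\<^sub>m nz ny) *\<^sub>v v)
       @\<^sub>v (hcat (hcat X3 Y3) (0\<^sub>m ny ny) *\<^sub>v v) @\<^sub>v (hcat (hcat (0\<^sub>m ny nx) (0\<^sub>m ny nw)) (1\<^sub>m ny) *\<^sub>v v)"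
    proof -
      have a34: "hcat (hcat X3 Y3) (0\<^sub>m ny ny) @\<^sub>r hcat (hcat (0\<^sub>m ny nx) (0\<^sub>m ny nw)) (1\<^sub>m ny)
          \<in> carrier_mat (ny + ny) (nx + (nw + ny))" using R3 R4 by (rule carrier_append_rows)
      have a234: "hcat (hcat F (0\<^sub>m nz nw)) (0\<^sub>m nz ny) @\<^sub>r hcat (hcat X3 Y3) (0\<^sub>m ny ny) @\<^sub>r hcat (hcat (0\<^sub>m ny nx) (0\<^sub>m ny nw)) (1\<^sub>m ny)
          \<in> carrier_mat (nz + (ny + ny)) (nx + (nw + ny))" using R2 a34 by (rule carrier_append_rows)
      show ?thesis unfolding G_def
        by (subst mat_mult_append[OF R1 a234 v], subst mat_mult_append[OF R2 a34 v],
            subst mat_mult_append[OF R3 R4 v], rule refl)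
    qed
    also have "\<dots> = xp @\<^sub>v ((F *\<^sub>v x) @\<^sub>v (s @\<^sub>v e))"
    proof -
      have h4: "hcat (hcat (0\<^sub>m ny nx) (0\<^sub>m ny nw)) (1\<^sub>m ny) *\<^sub>v v = e"
        using hm[of "0\<^sub>m ny nx" ny "0\<^sub>m ny nw" "1\<^sub>m ny"] x w e by simp
      show ?thesis unfolding xp_def s_def
        using X1 Y1 Z1 F X3 Y3 x w e h4 by (simp add: hm)
    qed
    finally show ?thesis .
  qed
  define vv where "vv = v @\<^sub>v (- (G *\<^sub>v v))"
  have vvc: "vv \<in> carrier_vec (dim_row (LMI_mat nx nu ny nw nz A B C D F Kp Dp (Lam ny lam j) sigma gamma P L M N Z))"
    unfolding Wdef vv_def using v G Gam Xi by auto
  have expand: "vv \<bullet> (LMI_mat nx nu ny nw nz A B C D F Kp Dp (Lam ny lam j) sigma gamma P L M N Z *\<^sub>v vv)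
     = v \<bullet> (Gam *\<^sub>v v) - (G *\<^sub>v v) \<bullet> (Xi *\<^sub>v (G *\<^sub>v v))"
    unfolding Wdef vv_def by (rule LMI_expand[OF Gam Xi G v])
  have vvx: "x \<bullet> x \<le> vv \<bullet> vv"
  proof -
    define r where "r = (w @\<^sub>v e) @\<^sub>v (- (G *\<^sub>v v))"
    have vv2: "vv = x @\<^sub>v r" unfolding vv_def r_def v_def by (simp add: append_vec_assoc)
    have rc: "r \<in> carrier_vec (dim_vec r)" unfolding carrier_vec_def by simp
    have "vv \<bullet> vv = x \<bullet> x + r \<bullet> r"
      unfolding vv2 by (rule scalar_prod_append[OF x rc x rc])
    hence "vv \<bullet> vv = x \<bullet> x + ((w @\<^sub>v e) @\<^sub>v (- (G *\<^sub>v v))) \<bullet> ((w @\<^sub>v e) @\<^sub>v (- (G *\<^sub>v v)))"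
      unfolding r_def .
    moreover have "0 \<le> ((w @\<^sub>v e) @\<^sub>v (- (G *\<^sub>v v))) \<bullet> ((w @\<^sub>v e) @\<^sub>v (- (G *\<^sub>v v)))"
      unfolding scalar_prod_def by (intro sum_nonneg) auto
    ultimately show ?thesis by simp
  qed
  have GamF: "v \<bullet> (Gam *\<^sub>v v) = sigma^2 * (x \<bullet> (P *\<^sub>v x)) + gamma^2 * (w \<bullet> w) + e \<bullet> ((Np + Z) *\<^sub>v e)"
  proof -
    have "v \<bullet> (Gam *\<^sub>v v) = x \<bullet> ((sigma^2 \<cdot>\<^sub>m P) *\<^sub>v x) + (w \<bullet> ((gamma^2 \<cdot>\<^sub>m 1\<^sub>m nw) *\<^sub>v w) + e \<bullet> ((Np + Z) *\<^sub>v e))"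
      unfolding Gam_def v_def using P Np Z x w e
      by (simp add: bdiag_qf[of _ nx _ "nw + ny"] bdiag_qf[of _ nw _ ny])
    also have "\<dots> = sigma^2 * (x \<bullet> (P *\<^sub>v x)) + gamma^2 * (w \<bullet> w) + e \<bullet> ((Np + Z) *\<^sub>v e)"
      using P x w by (simp add: smult_mat_mult_vec[of _ nx nx] smult_mat_mult_vec[of _ nw nw])
    finally show ?thesis .
  qed
  have XiF: "(G *\<^sub>v v) \<bullet> (Xi *\<^sub>v (G *\<^sub>v v)) = xp \<bullet> (P *\<^sub>v xp) + (F *\<^sub>v x) \<bullet> (F *\<^sub>v x)
      + (s \<bullet> ((L + M + Np) *\<^sub>v s) + s \<bullet> ((L - M - Nm) *\<^sub>v e) + e \<bullet> (transpose_mat (L - M - Nm) *\<^sub>v s) + e \<bullet> ((L + M + Z) *\<^sub>v e))"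
  proof -
    have "(G *\<^sub>v v) \<bullet> (Xi *\<^sub>v (G *\<^sub>v v)) = xp \<bullet> (P *\<^sub>v xp) + ((F *\<^sub>v x) \<bullet> (1\<^sub>m nz *\<^sub>v (F *\<^sub>v x)) + (s @\<^sub>v e) \<bullet> (R *\<^sub>v (s @\<^sub>v e)))"
      unfolding g Xi_def using P R xp Fx s e
      by (simp add: bdiag_qf[of _ nx _ "nz + (ny + ny)"] bdiag_qf[of _ nz _ "ny + ny"])
    also have "(s @\<^sub>v e) \<bullet> (R *\<^sub>v (s @\<^sub>v e)) = s \<bullet> ((L + M + Np) *\<^sub>v s) + s \<bullet> ((L - M - Nm) *\<^sub>v e) + e \<bullet> (transpose_mat (L - M - Nm) *\<^sub>v s) + e \<bullet> ((L + M + Z) *\<^sub>v e)"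
      unfolding R_def using L M Z Np Nm s e by (intro four_block_qf) auto
    finally show ?thesis using Fx by simp
  qed
  have LMN: "L $$ (i,k) = L $$ (k,i) \<and> M $$ (i,k) = M $$ (k,i) \<and> 0 \<le> L $$ (i,k) \<and> 0 \<le> M $$ (i,k) \<and> 0 \<le> N $$ (i,k)"
    if ik: "i < ny" "k < ny" for i k
  proof -
    define FB where "FB = four_block_mat L N (transpose_mat N) M"
    have FBd: "dim_row FB = ny + ny" "dim_col FB = ny + ny" unfolding FB_def using L M by auto
    have tr: "transpose_mat FB = FB" using symm unfolding sym_mat_def FB_def by auto
    have ent: "FB $$ (a, b) = FB $$ (b, a)" if "a < ny + ny" "b < ny + ny" for a b
      by (metis FBd index_transpose_mat(1) that tr)
    have nn: "0 \<le> FB $$ (a, b)" if "a < ny + ny" "b < ny + ny" for a b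
      using nonneg that FBd unfolding nonneg_mat_def FB_def by auto
    have "L $$ (i,k) = FB $$ (i,k)" "L $$ (k,i) = FB $$ (k,i)"
      "M $$ (i,k) = FB $$ (ny + i, ny + k)" "M $$ (k,i) = FB $$ (ny + k, ny + i)"
      "N $$ (i,k) = FB $$ (i, ny + k)"
      unfolding FB_def using L M N ik by auto
    thus ?thesis using ent nn ik by auto
  qed
  have s_idx: "s $ i = Dp * lam i * \<bar>(C *\<^sub>v x + D *\<^sub>v w) $ i\<bar>" if i: "i < ny" for i
  proof -
    have "s = Dp \<cdot>\<^sub>v (Lj *\<^sub>v (C *\<^sub>v x)) + Dp \<cdot>\<^sub>v (Lj *\<^sub>v (D *\<^sub>v w))"
      unfolding s_def X3_def Y3_def using Lj C D x w
      by (simp add: smult_mat_mult_vec[of _ ny nx] smult_mat_mult_vec[of _ ny nw])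
    moreover have l1: "(Lam ny lam j *\<^sub>v (C *\<^sub>v x)) $ i = lam i * j ! i * (C *\<^sub>v x) $ i"
      using C x i by (intro Lam_mult_vec) auto
    moreover have l2: "(Lam ny lam j *\<^sub>v (D *\<^sub>v w)) $ i = lam i * j ! i * (D *\<^sub>v w) $ i"
      using D w i by (intro Lam_mult_vec) auto
    ultimately have "s $ i = Dp * (lam i * j ! i * (C *\<^sub>v x) $ i) + Dp * (lam i * j ! i * (D *\<^sub>v w) $ i)"
      using i C D x w Lj unfolding Lj_def by (simp del: index_mult_mat_vec)
    also have "\<dots> = Dp * lam i * (j ! i * (C *\<^sub>v x + D *\<^sub>v w) $ i)"
      using i C D x w by (simp add: algebra_simps)
    finally show ?thesis using sgn i by simp
  qed
  have ab: "0 \<le> s $ i + e $ i \<and> 0 \<le> s $ i - e $ i" if i: "i < ny" for i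
    using s_idx[OF i] sector i by (auto simp: abs_le_iff)
  have Sform: "0 \<le> s \<bullet> ((L + M + Np) *\<^sub>v s) + s \<bullet> ((L - M - Nm) *\<^sub>v e) + e \<bullet> (transpose_mat (L - M - Nm) *\<^sub>v s) + e \<bullet> ((L + M + Z) *\<^sub>v e)
      - e \<bullet> ((Np + Z) *\<^sub>v e)"
  proof -
    have c1: "L + M + Np \<in> carrier_mat ny ny" "L - M - Nm \<in> carrier_mat ny ny"
      "transpose_mat (L - M - Nm) \<in> carrier_mat ny ny" "L + M + Z \<in> carrier_mat ny ny"
      "Np + Z \<in> carrier_mat ny ny" using L M Np Nm Z by auto
    have "s \<bullet> ((L + M + Np) *\<^sub>v s) + s \<bullet> ((L - M - Nm) *\<^sub>v e) + e \<bullet> (transpose_mat (L - M - Nm) *\<^sub>v s) + e \<bullet> ((L + M + Z) *\<^sub>v e)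
      - e \<bullet> ((Np + Z) *\<^sub>v e)
      = (\<Sum>i<ny. \<Sum>k<ny. (s$i + e$i) * L$$(i,k) * (s$k + e$k) + (s$i - e$i) * M$$(i,k) * (s$k - e$k)
           + (s$i + e$i) * N$$(i,k) * (s$k - e$k) + (s$i - e$i) * N$$(k,i) * (s$k + e$k))"
      unfolding bf5[OF c1 s e]
    proof (intro sum.cong refl)
      fix i k assume "i \<in> {..<ny}" "k \<in> {..<ny}"
      hence ik: "i < ny" "k < ny" by auto
      have sy: "L $$ (k,i) = L $$ (i,k)" "M $$ (k,i) = M $$ (i,k)" using LMN[OF ik] by auto
      show "s $ i * (L + M + Np) $$ (i, k) * s $ k + s $ i * (L - M - Nm) $$ (i, k) * e $ k +
          e $ i * transpose_mat (L - M - Nm) $$ (i, k) * s $ k + e $ i * (L + M + Z) $$ (i, k) * e $ k -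
          e $ i * (Np + Z) $$ (i, k) * e $ k =
          (s$i + e$i) * L$$(i,k) * (s$k + e$k) + (s$i - e$i) * M$$(i,k) * (s$k - e$k)
           + (s$i + e$i) * N$$(i,k) * (s$k - e$k) + (s$i - e$i) * N$$(k,i) * (s$k + e$k)"
        using ik L M N Z sy unfolding Np_def Nm_def by (simp add: algebra_simps)
    qed
    also have "\<dots> \<ge> 0"
    proof (intro sum_nonneg)
      fix i k assume "i \<in> {..<ny}" "k \<in> {..<ny}"
      hence ik: "i < ny" "k < ny" by auto
      note l = LMN[OF ik] and l2 = LMN[OF ik(2,1)] and ai = ab[OF ik(1)] and ak = ab[OF ik(2)]
      show "0 \<le> (s$i + e$i) * L$$(i,k) * (s$k + e$k) + (s$i - e$i) * M$$(i,k) * (s$k - e$k)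
           + (s$i + e$i) * N$$(i,k) * (s$k - e$k) + (s$i - e$i) * N$$(k,i) * (s$k + e$k)"
      proof -
        have m3: "\<And>a b c::real. 0 \<le> a \<Longrightarrow> 0 \<le> b \<Longrightarrow> 0 \<le> c \<Longrightarrow> 0 \<le> a * b * c" by simp
        have "0 \<le> (s$i + e$i) * L$$(i,k) * (s$k + e$k)" using l ai ak by (intro m3) auto
        moreover have "0 \<le> (s$i - e$i) * M$$(i,k) * (s$k - e$k)" using l ai ak by (intro m3) auto
        moreover have "0 \<le> (s$i + e$i) * N$$(i,k) * (s$k - e$k)" using l ai ak by (intro m3) auto
        moreover have "0 \<le> (s$i - e$i) * N$$(k,i) * (s$k + e$k)" using l2 ai ak by (intro m3) auto
        ultimately show ?thesis by linarith
      qed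
    qed
    finally show ?thesis .
  qed
  have "c * (x \<bullet> x) \<le> c * (vv \<bullet> vv)" using vvx c by (rule mult_left_mono)
  also have "\<dots> \<le> vv \<bullet> (LMI_mat nx nu ny nw nz A B C D F Kp Dp (Lam ny lam j) sigma gamma P L M N Z *\<^sub>v vv)"
    using coer vvc by blast
  finally have main: "c * (x \<bullet> x) \<le> v \<bullet> (Gam *\<^sub>v v) - (G *\<^sub>v v) \<bullet> (Xi *\<^sub>v (G *\<^sub>v v))"
    unfolding expand .
  show ?thesis using main Sform unfolding GamF XiF xp_def X1_def Y1_def Z1_def by linarith
qed

lemma qf_Qf:
  fixes P :: "real mat"
  assumes P: "P \<in> carrier_mat n n" and v: "v \<in> carrier_vec n"
  shows "v \<bullet> (P *\<^sub>v v) = Qf n (\<lambda>i k. P $$ (i,k)) (\<lambda>i. v $ i)"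
  unfolding bf_sum[OF P v v] Qf_def by (intro sum.cong refl) (simp add: ac_simps)

lemma sp_self: "v \<bullet> (v :: real vec) = (\<Sum>i<dim_vec v. (v $ i)^2)"
  by (simp add: scalar_prod_def atLeast0LessThan power2_eq_square)

lemma vnorm_sp: "vnorm v = sqrt (v \<bullet> v)"
  unfolding vnorm_def sp_self ..

lemma sp_self_nonneg: "0 \<le> v \<bullet> (v :: real vec)"
  unfolding sp_self by (intro sum_nonneg) auto

lemma pos_def_coercive:
  assumes pd: "pos_def M"
  shows "\<exists>c>0. \<forall>v \<in> carrier_vec (dim_row M). c * (v \<bullet> v) \<le> v \<bullet> (M *\<^sub>v v)"
proof -
  define n where "n = dim_row M"
  have M: "M \<in> carrier_mat n n" using pd unfolding pos_def_def sym_mat_def n_def by auto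
  have sym: "\<forall>i<n. \<forall>j<n. M $$ (i,j) = M $$ (j,i)"
  proof (intro allI impI)
    fix i j
    assume ij: "i < n" "j < n"
    have "transpose_mat M = M" using pd unfolding pos_def_def sym_mat_def by auto
    hence "M $$ (i,j) = transpose_mat M $$ (i,j)" by simp
    also have "\<dots> = M $$ (j,i)" using M ij by simp
    finally show "M $$ (i,j) = M $$ (j,i)" .
  qed
  have pos: "\<forall>x. (\<exists>i<n. x i \<noteq> 0) \<longrightarrow> Qf n (\<lambda>i k. M $$ (i,k)) x > 0"
  proof (intro allI impI)
    fix x :: "nat \<Rightarrow> real" assume "\<exists>i<n. x i \<noteq> 0"
    then obtain i where i: "i < n" "x i \<noteq> 0" by blast
    define v where "v = vec n x"
    have v: "v \<in> carrier_vec n" unfolding v_def by simp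
    have "v \<noteq> 0\<^sub>v n"
    proof
      assume "v = 0\<^sub>v n"
      hence "v $ i = 0" using i by simp
      thus False using i by (simp add: v_def)
    qed
    hence "v \<bullet> (M *\<^sub>v v) > 0" using pd v unfolding pos_def_def n_def by auto
    also have "v \<bullet> (M *\<^sub>v v) = Qf n (\<lambda>i k. M $$ (i,k)) x"
      unfolding qf_Qf[OF M v] by (rule Qf_cong) (simp add: v_def)
    finally show "Qf n (\<lambda>i k. M $$ (i,k)) x > 0" .
  qed
  obtain c where c: "c > 0" "\<forall>x. c * (\<Sum>i<n. (x i)^2) \<le> Qf n (\<lambda>i k. M $$ (i,k)) x"
    using Qf_coercive[OF sym pos] by blast
  show ?thesis
  proof (intro exI[of _ c] conjI ballI c(1))
    fix v :: "real vec" assume "v \<in> carrier_vec (dim_row M)"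
    hence v: "v \<in> carrier_vec n" unfolding n_def .
    show "c * (v \<bullet> v) \<le> v \<bullet> (M *\<^sub>v v)"
      using c(2)[rule_format, of "\<lambda>i. v $ i"] v unfolding qf_Qf[OF M v] sp_self by simp
  qed
qed

lemma Qf_upper: "\<exists>c>0. \<forall>x. Qf n P x \<le> c * (\<Sum>i<n. (x i)^2)"
proof -
  define K where "K = (\<Sum>i<n. \<Sum>j<n. \<bar>P i j\<bar>)"
  have K0: "0 \<le> K" unfolding K_def by (intro sum_nonneg) auto
  show ?thesis
  proof (intro exI[of _ "K + 1"] conjI allI)
    show "0 < K + 1" using K0 by simp
    fix x :: "nat \<Rightarrow> real"
    define S where "S = (\<Sum>i<n. (x i)^2)"
    have S0: "0 \<le> S" unfolding S_def by (intro sum_nonneg) auto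
    have xi: "(x i)^2 \<le> S" if "i < n" for i
      unfolding S_def using that by (intro member_le_sum) auto
    have xx: "\<bar>x i * x j\<bar> \<le> S" if "i < n" "j < n" for i j
    proof -
      have "2 * \<bar>x i * x j\<bar> \<le> (x i)^2 + (x j)^2"
        using zero_le_power2[of "\<bar>x i\<bar> - \<bar>x j\<bar>"]
        by (simp add: power2_diff abs_mult power2_abs)
      thus ?thesis using xi[OF that(1)] xi[OF that(2)] by linarith
    qed
    have "Qf n P x \<le> (\<Sum>i<n. \<Sum>j<n. \<bar>P i j\<bar> * S)"
      unfolding Qf_def
    proof (intro sum_mono)
      fix i j assume "i \<in> {..<n}" "j \<in> {..<n}"
      hence ij: "i < n" "j < n" by auto
      have "P i j * x i * x j \<le> \<bar>P i j * x i * x j\<bar>" by (rule abs_ge_self)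
      also have "\<dots> = \<bar>P i j\<bar> * \<bar>x i * x j\<bar>" by (simp add: abs_mult)
      also have "\<dots> \<le> \<bar>P i j\<bar> * S" using xx[OF ij] by (intro mult_left_mono) auto
      finally show "P i j * x i * x j \<le> \<bar>P i j\<bar> * S" .
    qed
    also have "\<dots> = K * S" unfolding K_def by (simp add: sum_distrib_right)
    also have "\<dots> \<le> (K + 1) * S" using S0 by (simp add: algebra_simps)
    finally show "Qf n P x \<le> (K + 1) * (\<Sum>i<n. (x i)^2)" unfolding S_def .
  qed
qed

lemma qf_upper:
  fixes M :: "real mat"
  assumes M: "M \<in> carrier_mat n n"
  shows "\<exists>c>0. \<forall>v \<in> carrier_vec n. v \<bullet> (M *\<^sub>v v) \<le> c * (v \<bullet> v)"
proof -
  obtain c where c: "c > 0" "\<forall>x. Qf n (\<lambda>i k. M $$ (i,k)) x \<le> c * (\<Sum>i<n. (x i)^2)"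
    using Qf_upper by blast
  show ?thesis
    using c M by (intro exI[of _ c]) (auto simp: qf_Qf sp_self)
qed

definition Bf :: "nat \<Rightarrow> (nat \<Rightarrow> nat \<Rightarrow> real) \<Rightarrow> (nat \<Rightarrow> real) \<Rightarrow> (nat \<Rightarrow> real) \<Rightarrow> real" where
  "Bf n P x y = (\<Sum>i<n. \<Sum>j<n. P i j * x i * y j)"

lemma Qf_lin:
  assumes sym: "\<forall>i<n. \<forall>j<n. P i j = P j i"
  shows "Qf n P (\<lambda>i. x i + t * y i) = Qf n P x + 2 * t * Bf n P x y + t^2 * Qf n P y"
proof -
  have sw: "(\<Sum>i<n. \<Sum>j<n. P i j * y i * x j) = Bf n P x y"
    unfolding Bf_def
    by (subst sum.swap) (intro sum.cong refl, simp add: sym ac_simps)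
  have "Qf n P (\<lambda>i. x i + t * y i) = (\<Sum>i<n. \<Sum>j<n. P i j * x i * x j + t * (P i j * x i * y j)
       + t * (P i j * y i * x j) + t^2 * (P i j * y i * y j))"
    unfolding Qf_def by (intro sum.cong refl) (simp add: algebra_simps power2_eq_square)
  also have "\<dots> = Qf n P x + t * Bf n P x y + t * (\<Sum>i<n. \<Sum>j<n. P i j * y i * x j) + t^2 * Qf n P y"
    unfolding Qf_def Bf_def by (simp add: sum.distrib sum_distrib_left)
  finally show ?thesis unfolding sw by simp
qed

lemma Qf_CS:
  assumes sym: "\<forall>i<n. \<forall>j<n. P i j = P j i" and psd: "\<forall>z. 0 \<le> Qf n P z"
  shows "(Bf n P x y)^2 \<le> Qf n P x * Qf n P y"
proof -
  define a where "a = Qf n P x"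
  define b where "b = Bf n P x y"
  define q where "q = Qf n P y"
  have quad: "0 \<le> a + 2 * t * b + t^2 * q" for t
    using psd[rule_format, of "\<lambda>i. x i + t * y i"] unfolding Qf_lin[OF sym] a_def b_def q_def .
  have a0: "0 \<le> a" unfolding a_def using psd by simp
  show ?thesis
  proof (cases "q = 0")
    case True
    have "b = 0"
    proof (rule ccontr)
      assume "b \<noteq> 0"
      have "0 \<le> a + 2 * (- (a + 1) / (2 * b)) * b + (- (a + 1) / (2 * b))^2 * q" by (rule quad)
      also have "\<dots> = -1" using \<open>b \<noteq> 0\<close> True by (simp add: field_simps)
      finally show False by simp
    qed
    thus ?thesis unfolding b_def[symmetric] a_def[symmetric] q_def[symmetric] using True by simp
  next
    case False
    have "0 \<le> q" using psd unfolding q_def by simp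
    hence q0: "q > 0" using False by linarith
    have "0 \<le> a + 2 * (- b / q) * b + (- b / q)^2 * q" by (rule quad)
    also have "\<dots> = a - b^2 / q" using q0 by (simp add: field_simps power2_eq_square)
    finally have "b^2 / q \<le> a" by simp
    hence "b^2 \<le> a * q" using q0 by (simp add: divide_le_eq)
    thus ?thesis unfolding a_def b_def q_def .
  qed
qed

lemma Qf_triangle:
  assumes sym: "\<forall>i<n. \<forall>j<n. P i j = P j i" and psd: "\<forall>z. 0 \<le> Qf n P z"
  shows "sqrt (Qf n P (\<lambda>i. x i + y i)) \<le> sqrt (Qf n P x) + sqrt (Qf n P y)"
proof -
  have e: "Qf n P (\<lambda>i. x i + y i) = Qf n P x + 2 * Bf n P x y + Qf n P y"
    using Qf_lin[OF sym, of x 1 y] by simp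
  have "Bf n P x y \<le> sqrt ((Bf n P x y)^2)" by simp
  also have "\<dots> \<le> sqrt (Qf n P x * Qf n P y)"
    using Qf_CS[OF sym psd, of x y] by (rule real_sqrt_le_mono)
  also have "\<dots> = sqrt (Qf n P x) * sqrt (Qf n P y)" by (simp add: real_sqrt_mult)
  finally have "Qf n P (\<lambda>i. x i + y i) \<le> (sqrt (Qf n P x) + sqrt (Qf n P y))^2"
    unfolding e power2_sum using psd by simp
  hence "sqrt (Qf n P (\<lambda>i. x i + y i)) \<le> sqrt ((sqrt (Qf n P x) + sqrt (Qf n P y))^2)"
    by (rule real_sqrt_le_mono)
  also have "\<dots> = sqrt (Qf n P x) + sqrt (Qf n P y)"
    using psd[rule_format, of x] psd[rule_format, of y] by simp
  finally show ?thesis .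
qed

lemma qf_triangle:
  fixes P :: "real mat"
  assumes P: "pos_def P" "P \<in> carrier_mat n n" and u: "u \<in> carrier_vec n" and w: "w \<in> carrier_vec n"
  shows "sqrt ((u + w) \<bullet> (P *\<^sub>v (u + w))) \<le> sqrt (u \<bullet> (P *\<^sub>v u)) + sqrt (w \<bullet> (P *\<^sub>v w))"
proof -
  have sym: "\<forall>i<n. \<forall>j<n. P $$ (i,j) = P $$ (j,i)"
  proof (intro allI impI)
    fix i j
    assume ij: "i < n" "j < n"
    have "transpose_mat P = P" using P unfolding pos_def_def sym_mat_def by auto
    hence "P $$ (i,j) = transpose_mat P $$ (i,j)" by simp
    also have "\<dots> = P $$ (j,i)" using P ij by simp
    finally show "P $$ (i,j) = P $$ (j,i)" .
  qed
  have psd: "\<forall>z. 0 \<le> Qf n (\<lambda>i k. P $$ (i,k)) z"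
  proof
    fix z :: "nat \<Rightarrow> real"
    define v where "v = vec n z"
    have v: "v \<in> carrier_vec n" unfolding v_def by simp
    have "0 \<le> v \<bullet> (P *\<^sub>v v)"
    proof (cases "v = 0\<^sub>v n")
      case True thus ?thesis using P by simp
    next
      case False thus ?thesis using P v unfolding pos_def_def by (auto intro: less_imp_le)
    qed
    also have "v \<bullet> (P *\<^sub>v v) = Qf n (\<lambda>i k. P $$ (i,k)) z"
      unfolding qf_Qf[OF P(2) v] by (rule Qf_cong) (simp add: v_def)
    finally show "0 \<le> Qf n (\<lambda>i k. P $$ (i,k)) z" .
  qed
  have uw: "u + w \<in> carrier_vec n" using u w by simp
  have "Qf n (\<lambda>i k. P $$ (i,k)) (\<lambda>i. (u + w) $ i) = Qf n (\<lambda>i k. P $$ (i,k)) (\<lambda>i. u $ i + w $ i)"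
    by (rule Qf_cong) (use w in auto)
  thus ?thesis unfolding qf_Qf[OF P(2) uw] qf_Qf[OF P(2) u] qf_Qf[OF P(2) w]
    using Qf_triangle[OF sym psd] by simp
qed

lemma qf_nonneg:
  fixes P :: "real mat"
  assumes P: "pos_def P" "P \<in> carrier_mat n n" and v: "v \<in> carrier_vec n"
  shows "0 \<le> v \<bullet> (P *\<^sub>v v)"
proof (cases "v = 0\<^sub>v n")
  case True thus ?thesis using P v by simp
next
  case False thus ?thesis using P v unfolding pos_def_def by (auto intro: less_imp_le)
qed

lemma vnorm_mult_bound:
  fixes Mm :: "real mat"
  assumes Mm: "Mm \<in> carrier_mat n m" and d: "d \<in> carrier_vec m" and b: "\<forall>j<m. \<bar>d $ j\<bar> \<le> b"
  shows "vnorm (Mm *\<^sub>v d) \<le> (\<Sum>i<n. \<Sum>j<m. \<bar>Mm $$ (i,j)\<bar>) * b"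
proof -
  have "vnorm (Mm *\<^sub>v d) = L2_set (\<lambda>i. (Mm *\<^sub>v d) $ i) {..<n}"
    unfolding vnorm_def L2_set_def using Mm by simp
  also have "\<dots> \<le> (\<Sum>i<n. \<bar>(Mm *\<^sub>v d) $ i\<bar>)" by (rule L2_set_le_sum_abs)
  also have "\<dots> \<le> (\<Sum>i<n. \<Sum>j<m. \<bar>Mm $$ (i,j)\<bar> * b)"
  proof (intro sum_mono)
    fix i assume "i \<in> {..<n}"
    hence i: "i < n" by simp
    have "\<bar>(Mm *\<^sub>v d) $ i\<bar> = \<bar>\<Sum>j<m. Mm $$ (i,j) * d $ j\<bar>" using mv_index[OF Mm d i] by simp
    also have "\<dots> \<le> (\<Sum>j<m. \<bar>Mm $$ (i,j) * d $ j\<bar>)" by (rule sum_abs)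
    also have "\<dots> \<le> (\<Sum>j<m. \<bar>Mm $$ (i,j)\<bar> * b)"
      using b by (intro sum_mono) (auto simp: abs_mult intro: mult_left_mono)
    finally show "\<bar>(Mm *\<^sub>v d) $ i\<bar> \<le> (\<Sum>j<m. \<bar>Mm $$ (i,j)\<bar> * b)" .
  qed
  also have "\<dots> = (\<Sum>i<n. \<Sum>j<m. \<bar>Mm $$ (i,j)\<bar>) * b" by (simp add: sum_distrib_right)
  finally show ?thesis .
qed

lemma Eprime_le:
  assumes le: "Eprime e d l y \<le> ereal E" and l: "0 < l"
  shows "\<bar>e\<bar> \<le> E * l * \<bar>y\<bar> + d"
proof (cases "y = 0")
  case True
  show ?thesis
  proof (cases "\<bar>e\<bar> - d > 0")
    case True2: True
    hence "Eprime e d l y = \<infinity>" using True unfolding Eprime_def by simp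
    thus ?thesis using le by simp
  next
    case False thus ?thesis using True by simp
  qed
next
  case False
  hence "(\<bar>e\<bar> - d) / (l * \<bar>y\<bar>) \<le> E" using le unfolding Eprime_def by simp
  moreover have "0 < l * \<bar>y\<bar>" using False l by simp
  ultimately have "\<bar>e\<bar> - d \<le> E * (l * \<bar>y\<bar>)" by (simp add: pos_divide_le_eq)
  thus ?thesis by (simp add: mult.assoc)
qed

lemma protocol_sector:
  assumes ps: "protocol_step ny lam del dmin dmax yp y yn E" and ny: "0 < ny"
    and lam: "\<forall>i<ny. 0 < lam i" and del: "\<forall>i<ny. 0 \<le> del i"
    and dm: "0 \<le> dmin" "dmin \<le> dmax"
  shows "dmin \<le> E \<and> E \<le> dmax \<and> (\<forall>i<ny. \<bar>yn $ i - y $ i\<bar> \<le> E * lam i * \<bar>y $ i\<bar> + del i)"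
proof -
  define Ep where "Ep = (\<lambda>i. Eprime (yp $ i - y $ i) (del i) (lam i) (y $ i))"
  define m where "m = Max (Ep ` {..<ny})"
  from ps obtain T where T: "T \<subseteq> {..<ny}"
    and cases: "(if m < ereal dmin then T = {} \<and> E = dmin
            else if m \<ge> ereal dmax then T = {i \<in> {..<ny}. Ep i \<ge> ereal dmax} \<and> E = dmax
            else (\<exists>i0 < ny. Ep i0 = m \<and> T = {i0}) \<and> E = real_of_ereal m)"
    and yn: "yn = vec ny (\<lambda>i. if i \<in> T then y $ i else yp $ i)"
    unfolding protocol_step_def Let_def Ep_def m_def by blast
  have mge: "Ep i \<le> m" if "i < ny" for i unfolding m_def using that by (intro Max_ge) auto
  have key: "dmin \<le> E \<and> E \<le> dmax \<and> (\<forall>i<ny. i \<notin> T \<longrightarrow> Ep i \<le> ereal E)"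
  proof (cases "m < ereal dmin")
    case True
    hence "T = {}" "E = dmin" using cases by auto
    thus ?thesis using True mge dm by (auto intro: order_trans less_imp_le)
  next
    case False1: False
    show ?thesis
    proof (cases "m \<ge> ereal dmax")
      case True
      hence TT: "T = {i \<in> {..<ny}. Ep i \<ge> ereal dmax}" "E = dmax" using cases False1 by auto
      thus ?thesis using dm by auto
    next
      case False
      hence E: "E = real_of_ereal m" using cases False1 by auto
      have fin: "m = ereal E" using False1 False unfolding E
        by (cases m) auto
      thus ?thesis using False1 False mge by auto
    qed
  qed
  show ?thesis
  proof (intro conjI allI impI)
    show "dmin \<le> E" "E \<le> dmax" using key by auto
    fix i assume i: "i < ny"
    show "\<bar>yn $ i - y $ i\<bar> \<le> E * lam i * \<bar>y $ i\<bar> + del i"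
    proof (cases "i \<in> T")
      case True
      have "0 \<le> E" using key dm by linarith
      moreover have "0 \<le> lam i" using lam i by (simp add: less_imp_le)
      ultimately have "0 \<le> E * lam i * \<bar>y $ i\<bar>" by simp
      thus ?thesis using True i yn del by simp
    next
      case False
      hence "Ep i \<le> ereal E" using key i by auto
      hence "\<bar>yp $ i - y $ i\<bar> \<le> E * lam i * \<bar>y $ i\<bar> + del i"
        unfolding Ep_def using lam i by (intro Eprime_le) auto
      thus ?thesis using False i yn by simp
    qed
  qed
qed

lemma vinf_fin: "finite (insert 0 {\<bar>v $ i\<bar> | i. i < dim_vec v})"
proof -
  have "{\<bar>v $ i\<bar> | i. i < dim_vec v} = (\<lambda>i. \<bar>v $ i\<bar>) ` {..<dim_vec v}" by auto
  thus ?thesis by simp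
qed

lemma vinf_ge: "i < dim_vec v \<Longrightarrow> \<bar>v $ i\<bar> \<le> vinf v"
  unfolding vinf_def by (intro Max_ge[OF vinf_fin]) auto

lemma vinf_nonneg: "0 \<le> vinf v"
  unfolding vinf_def by (intro Max_ge[OF vinf_fin]) auto

lemma vinf_le: "0 \<le> b \<Longrightarrow> \<forall>i<dim_vec v. \<bar>v $ i\<bar> \<le> b \<Longrightarrow> vinf v \<le> b"
  unfolding vinf_def by (subst Max_le_iff[OF vinf_fin]) auto

lemma minf_bound:
  fixes Dm :: "real mat"
  assumes Dm: "Dm \<in> carrier_mat n m" and w: "w \<in> carrier_vec m" and i: "i < n"
  shows "\<bar>(Dm *\<^sub>v w) $ i\<bar> \<le> minf Dm * vinf w" "0 \<le> minf Dm"
proof -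
  define S where "S = {vinf (Dm *\<^sub>v v) | v. v \<in> carrier_vec (dim_col Dm) \<and> vinf v \<le> 1}"
  define K where "K = (\<Sum>i<n. \<Sum>j<m. \<bar>Dm $$ (i,j)\<bar>)"
  have bdd: "bdd_above S"
  proof (rule bdd_aboveI)
    fix a assume "a \<in> S"
    then obtain v where v: "v \<in> carrier_vec m" "vinf v \<le> 1" "a = vinf (Dm *\<^sub>v v)"
      unfolding S_def using Dm by auto
    have K0: "0 \<le> K" unfolding K_def by (intro sum_nonneg) auto
    have "vinf (Dm *\<^sub>v v) \<le> K"
    proof (rule vinf_le[OF K0], intro allI impI)
      fix k assume "k < dim_vec (Dm *\<^sub>v v)"
      hence k: "k < n" using Dm by simp
      have "\<bar>(Dm *\<^sub>v v) $ k\<bar> = \<bar>\<Sum>j<m. Dm $$ (k,j) * v $ j\<bar>" using mv_index[OF Dm v(1) k] by simp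
      also have "\<dots> \<le> (\<Sum>j<m. \<bar>Dm $$ (k,j) * v $ j\<bar>)" by (rule sum_abs)
      also have "\<dots> \<le> (\<Sum>j<m. \<bar>Dm $$ (k,j)\<bar>)"
      proof (intro sum_mono)
        fix j assume "j \<in> {..<m}"
        hence "\<bar>v $ j\<bar> \<le> 1" using vinf_ge[of j v] v by auto
        thus "\<bar>Dm $$ (k,j) * v $ j\<bar> \<le> \<bar>Dm $$ (k,j)\<bar>" by (simp add: abs_mult mult_left_le)
      qed
      also have "\<dots> \<le> K" unfolding K_def using k by (intro member_le_sum[where f = "\<lambda>i. \<Sum>j<m. \<bar>Dm $$ (i,j)\<bar>"]) (auto intro: sum_nonneg)
      finally show "\<bar>(Dm *\<^sub>v v) $ k\<bar> \<le> K" .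
    qed
    thus "a \<le> K" using v by simp
  qed
  have mS: "minf Dm = Sup S" unfolding minf_def S_def ..
  have up: "vinf (Dm *\<^sub>v v) \<le> minf Dm" if "v \<in> carrier_vec m" "vinf v \<le> 1" for v
    unfolding mS using that Dm by (intro cSup_upper[OF _ bdd]) (auto simp: S_def)
  show m0: "0 \<le> minf Dm"
  proof -
    have "vinf (0\<^sub>v m :: real vec) \<le> 1" by (rule vinf_le) auto
    from up[OF _ this] have "vinf (Dm *\<^sub>v 0\<^sub>v m) \<le> minf Dm" by simp
    thus ?thesis using vinf_nonneg order_trans by blast
  qed
  show "\<bar>(Dm *\<^sub>v w) $ i\<bar> \<le> minf Dm * vinf w"
  proof (cases "vinf w = 0")
    case True
    have "\<forall>j<m. w $ j = 0" using vinf_ge[of _ w] True w by fastforce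
    hence "(Dm *\<^sub>v w) $ i = 0" unfolding mv_index[OF Dm w i] by simp
    thus ?thesis using True by simp
  next
    case False
    define t where "t = vinf w"
    have t: "0 < t" using False vinf_nonneg[of w] unfolding t_def by simp
    define u where "u = (1 / t) \<cdot>\<^sub>v w"
    have u: "u \<in> carrier_vec m" unfolding u_def using w by simp
    have "vinf u \<le> 1"
    proof (rule vinf_le, simp, intro allI impI)
      fix j assume "j < dim_vec u"
      hence j: "j < dim_vec w" unfolding u_def by simp
      have "\<bar>u $ j\<bar> = \<bar>w $ j\<bar> / t" unfolding u_def using j t by simp
      also have "\<dots> \<le> 1" using vinf_ge[OF j] t unfolding t_def by simp
      finally show "\<bar>u $ j\<bar> \<le> 1" .
    qed
    from up[OF u this] have "vinf (Dm *\<^sub>v u) \<le> minf Dm" .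
    moreover have "\<bar>(Dm *\<^sub>v u) $ i\<bar> \<le> vinf (Dm *\<^sub>v u)" using Dm i by (intro vinf_ge) simp
    moreover have "(Dm *\<^sub>v u) $ i = (Dm *\<^sub>v w) $ i / t"
      unfolding u_def mult_mat_vec[OF Dm w] using Dm i by simp
    ultimately have "\<bar>(Dm *\<^sub>v w) $ i\<bar> / t \<le> minf Dm" using t by simp
    thus ?thesis using t unfolding t_def[symmetric] by (simp add: divide_le_eq mult.commute)
  qed
qed

lemma mult_mat_vec_zero_right[simp]: "A \<in> carrier_mat n m \<Longrightarrow> A *\<^sub>v 0\<^sub>v m = (0\<^sub>v n :: real vec)"
  by (intro eq_vecI) auto

lemma vec_add_diff: "a \<in> carrier_vec n \<Longrightarrow> b \<in> carrier_vec n \<Longrightarrow> a + (b - a) = (b :: real vec)"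
  by (intro eq_vecI) auto

lemma dyn_eq:
  fixes A B Kp C :: "real mat"
  assumes A: "A \<in> carrier_mat nx nx" and B: "B \<in> carrier_mat nx nu" and Kp: "Kp \<in> carrier_mat nu ny"
    and C: "C \<in> carrier_mat ny nx" and x: "x \<in> carrier_vec nx" and v: "v \<in> carrier_vec ny"
  shows "A *\<^sub>v x + B *\<^sub>v (Kp *\<^sub>v (C *\<^sub>v x + v)) = (A + B * Kp * C) *\<^sub>v x + (B * Kp) *\<^sub>v v"
proof -
  have "B *\<^sub>v (Kp *\<^sub>v (C *\<^sub>v x + v)) = B *\<^sub>v (Kp *\<^sub>v (C *\<^sub>v x)) + B *\<^sub>v (Kp *\<^sub>v v)"
    using B Kp C x v by (simp add: mult_add_distrib_mat_vec[of _ nu ny] mult_add_distrib_mat_vec[of _ nx nu])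
  moreover have "(A + B * Kp * C) *\<^sub>v x = A *\<^sub>v x + B *\<^sub>v (Kp *\<^sub>v (C *\<^sub>v x))"
  proof -
    have BK: "B * Kp \<in> carrier_mat nx ny" using B Kp by simp
    have "(B * Kp * C) *\<^sub>v x = (B * Kp) *\<^sub>v (C *\<^sub>v x)" by (rule assoc_mult_mat_vec[OF BK C x])
    also have "\<dots> = B *\<^sub>v (Kp *\<^sub>v (C *\<^sub>v x))" using B Kp C x by (intro assoc_mult_mat_vec) auto
    finally have e: "(B * Kp * C) *\<^sub>v x = B *\<^sub>v (Kp *\<^sub>v (C *\<^sub>v x))" .
    have "(A + B * Kp * C) *\<^sub>v x = A *\<^sub>v x + (B * Kp * C) *\<^sub>v x"
      using A B Kp C x by (intro add_mult_distrib_mat_vec[of _ nx nx]) auto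
    thus ?thesis unfolding e .
  qed
  moreover have "(B * Kp) *\<^sub>v v = B *\<^sub>v (Kp *\<^sub>v v)" using B Kp v by simp
  moreover have c: "A *\<^sub>v x \<in> carrier_vec nx" "B *\<^sub>v (Kp *\<^sub>v (C *\<^sub>v x)) \<in> carrier_vec nx"
    "B *\<^sub>v (Kp *\<^sub>v v) \<in> carrier_vec nx" using A B Kp C x v by auto
  ultimately show ?thesis by (simp only: assoc_add_vec[OF c])
qed

lemma min_const_finite:
  fixes Q :: "'a \<Rightarrow> real \<Rightarrow> bool"
  assumes fin: "finite S" and ne: "S \<noteq> {}"
    and ex: "\<forall>s\<in>S. \<exists>c>0. Q s c"
    and mono: "\<And>s c c'. Q s c \<Longrightarrow> 0 < c' \<Longrightarrow> c' \<le> c \<Longrightarrow> Q s c'"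
  shows "\<exists>c>0. \<forall>s\<in>S. Q s c"
  using fin ne ex
proof (induction S rule: finite_ne_induct)
  case (singleton x) thus ?case by auto
next
  case (insert x F)
  obtain c1 where c1: "c1 > 0" "Q x c1" using insert.prems by auto
  obtain c2 where c2: "c2 > 0" "\<forall>s\<in>F. Q s c2" using insert.IH insert.prems by auto
  have "Q x (min c1 c2)" using c1 c2 by (intro mono[OF c1(2)]) auto
  moreover have "\<forall>s\<in>F. Q s (min c1 c2)" using c2 c1 mono by (meson min.cobounded2 min_less_iff_conj)
  ultimately show ?case using c1 c2 by (intro exI[of _ "min c1 c2"]) auto
qed

lemma Jset_finite: "finite (Jset n)"
proof -
  have "Jset n \<subseteq> {xs. set xs \<subseteq> {1, -1} \<and> length xs = n}" unfolding Jset_def by auto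
  thus ?thesis by (rule finite_subset) (intro finite_lists_length_eq, simp)
qed

lemma sign_list:
  fixes yv :: "real vec"
  shows "\<exists>j\<in>Jset n. \<forall>i<n. j ! i * yv $ i = \<bar>yv $ i\<bar>"
proof -
  define j where "j = map (\<lambda>i. if 0 \<le> yv $ i then 1 else (-1::real)) [0..<n]"
  have "j \<in> Jset n" unfolding Jset_def j_def by auto
  moreover have "\<forall>i<n. j ! i * yv $ i = \<bar>yv $ i\<bar>" unfolding j_def by auto
  ultimately show ?thesis by blast
qed

lemma clamp_split:
  fixes e al be :: real
  assumes "\<bar>e\<bar> \<le> al + be" "0 \<le> al" "0 \<le> be"
  shows "\<bar>max (- al) (min al e)\<bar> \<le> al \<and> \<bar>e - max (- al) (min al e)\<bar> \<le> be"
  using assms by (auto simp: abs_le_iff max_def min_def)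

context
  fixes nx nu ny nw nz r :: nat
    and A B C D F P :: "real mat"
    and K :: "nat \<Rightarrow> real mat"
    and Dl lam del :: "nat \<Rightarrow> real"
    and L M N Z :: "nat \<Rightarrow> real list \<Rightarrow> real mat"
    and sigma gamma :: real
  assumes ny_pos: "0 < ny"
    and A_dim: "A \<in> carrier_mat nx nx" and B_dim: "B \<in> carrier_mat nx nu"
    and C_dim: "C \<in> carrier_mat ny nx" and D_dim: "D \<in> carrier_mat ny nw"
    and F_dim: "F \<in> carrier_mat nz nx"
    and r_pos: "1 \<le> r"
    and Dl_nonneg: "0 \<le> Dl 0"
    and Dl_incr: "\<forall>p < r. Dl p < Dl (Suc p)"
    and K_dim: "\<forall>p \<in> {1..r}. K p \<in> carrier_mat nu ny"
    and lam_pos: "\<forall>i < ny. 0 < lam i"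
    and del_nonneg: "\<forall>i < ny. 0 \<le> del i"
    and sigma: "0 < sigma" "sigma \<le> 1"
    and gamma: "0 < gamma"
    and P_dim: "P \<in> carrier_mat nx nx" and P_pd: "pos_def P"
    and LMN_dim: "\<forall>p \<in> {1..r}. \<forall>j \<in> Jset ny.
        L p j \<in> carrier_mat ny ny \<and> M p j \<in> carrier_mat ny ny \<and> N p j \<in> carrier_mat ny ny
        \<and> Z p j \<in> carrier_mat ny ny"
    and LMN_sym_nonneg: "\<forall>p \<in> {1..r}. \<forall>j \<in> Jset ny.
        sym_mat (four_block_mat (L p j) (N p j) (transpose_mat (N p j)) (M p j))
        \<and> nonneg_mat (four_block_mat (L p j) (N p j) (transpose_mat (N p j)) (M p j))"
    and Z_sym: "\<forall>p \<in> {1..r}. \<forall>j \<in> Jset ny. sym_mat (Z p j)"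
    and LMI: "\<forall>p \<in> {1..r}. \<forall>j \<in> Jset ny.
        pos_def (LMI_mat nx nu ny nw nz A B C D F (K p) (Dl p) (Lam ny lam j) sigma gamma P
                   (L p j) (M p j) (N p j) (Z p j))"
begin

lemma Dl_mono: "a \<le> b \<Longrightarrow> b \<le> r \<Longrightarrow> Dl a \<le> Dl b"
proof (induction b)
  case 0 thus ?case by simp
next
  case (Suc b)
  show ?case
  proof (cases "a = Suc b")
    case True thus ?thesis by simp
  next
    case False
    hence "a \<le> b" using Suc.prems by simp
    hence "Dl a \<le> Dl b" using Suc by simp
    also have "Dl b < Dl (Suc b)" using Dl_incr Suc.prems by simp
    finally show ?thesis by simp
  qed
qed

lemma find_p:
  assumes E: "Dl 0 \<le> E" "E \<le> Dl r"
  shows "\<exists>p. 1 \<le> p \<and> p \<le> r \<and> E \<in> Eint Dl p \<and> E \<le> Dl p"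
proof (cases "E \<le> Dl 1")
  case True thus ?thesis using E r_pos by (intro exI[of _ 1]) (auto simp: Eint_def)
next
  case False
  define p where "p = (LEAST p. E \<le> Dl p)"
  have pE: "E \<le> Dl p" unfolding p_def by (rule LeastI[of _ r]) (rule E(2))
  have pr: "p \<le> r" unfolding p_def by (rule Least_le) (rule E(2))
  have p1: "p \<noteq> 0" "p \<noteq> 1"
  proof -
    show "p \<noteq> 1" using pE False by auto
    show "p \<noteq> 0"
    proof
      assume "p = 0"
      hence "E \<le> Dl 0" using pE by simp
      moreover have "Dl 0 \<le> Dl 1" using Dl_mono[of 0 1] r_pos by simp
      ultimately show False using False by simp
    qed
  qed
  have "\<not> E \<le> Dl (p - 1)" unfolding p_def by (rule not_less_Least) (use p1 p_def in simp)
  thus ?thesis using pE pr p1 by (intro exI[of _ p]) (auto simp: Eint_def)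
qed

lemma traj_step:
  assumes tr: "cl_traj nx nu ny nw A B C D Dl r K lam dl w yinit x u yh Ev"
    and dl: "\<forall>i<ny. 0 \<le> dl i"
  shows "\<exists>p. 1 \<le> p \<and> p \<le> r \<and> u k = K p *\<^sub>v yh k \<and> 0 \<le> Dl p \<and>
     (\<forall>i<ny. \<bar>yh k $ i - (C *\<^sub>v x k + D *\<^sub>v w k) $ i\<bar> \<le> Dl p * lam i * \<bar>(C *\<^sub>v x k + D *\<^sub>v w k) $ i\<bar> + dl i)"
proof -
  have ps: "protocol_step ny lam dl (Dl 0) (Dl r) (if k = 0 then yinit else yh (k - 1))
      (C *\<^sub>v x k + D *\<^sub>v w k) (yh k) (Ev k)" using tr unfolding cl_traj_def by blast
  have d0r: "Dl 0 \<le> Dl r" using Dl_mono[of 0 r] by simp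
  note sec = protocol_sector[OF ps ny_pos lam_pos dl Dl_nonneg d0r]
  obtain p where p: "1 \<le> p" "p \<le> r" "Ev k \<in> Eint Dl p" "Ev k \<le> Dl p" using find_p sec by blast
  have u: "u k = K p *\<^sub>v yh k" using tr p unfolding cl_traj_def by blast
  have Dp0: "0 \<le> Dl p" using Dl_mono[of 0 p] p Dl_nonneg by simp
  have E0: "0 \<le> Ev k" using sec Dl_nonneg by linarith
  have "\<forall>i<ny. \<bar>yh k $ i - (C *\<^sub>v x k + D *\<^sub>v w k) $ i\<bar> \<le> Dl p * lam i * \<bar>(C *\<^sub>v x k + D *\<^sub>v w k) $ i\<bar> + dl i"
  proof (intro allI impI)
    fix i assume i: "i < ny"
    have "Ev k * lam i * \<bar>(C *\<^sub>v x k + D *\<^sub>v w k) $ i\<bar> \<le> Dl p * lam i * \<bar>(C *\<^sub>v x k + D *\<^sub>v w k) $ i\<bar>"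
      using p(4) lam_pos i by (intro mult_right_mono) auto
    thus "\<bar>yh k $ i - (C *\<^sub>v x k + D *\<^sub>v w k) $ i\<bar> \<le> Dl p * lam i * \<bar>(C *\<^sub>v x k + D *\<^sub>v w k) $ i\<bar> + dl i"
      using sec i by fastforce
  qed
  thus ?thesis using p u Dp0 by blast
qed

abbreviation WW where "WW p j \<equiv> LMI_mat nx nu ny nw nz A B C D F (K p) (Dl p) (Lam ny lam j) sigma gamma P
                   (L p j) (M p j) (N p j) (Z p j)"

lemma coer_all:
  "\<exists>c>0. \<forall>pj \<in> {1..r} \<times> Jset ny. \<forall>vv \<in> carrier_vec (dim_row (WW (fst pj) (snd pj))).
      c * (vv \<bullet> vv) \<le> vv \<bullet> (WW (fst pj) (snd pj) *\<^sub>v vv)"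
proof (rule min_const_finite)
  show "finite ({1..r} \<times> Jset ny)" using Jset_finite by simp
  have "replicate ny 1 \<in> Jset ny" unfolding Jset_def by auto
  thus "{1..r} \<times> Jset ny \<noteq> {}" using r_pos by auto
  show "\<forall>s\<in>{1..r} \<times> Jset ny. \<exists>c>0. \<forall>vv \<in> carrier_vec (dim_row (WW (fst s) (snd s))).
      c * (vv \<bullet> vv) \<le> vv \<bullet> (WW (fst s) (snd s) *\<^sub>v vv)"
    using LMI pos_def_coercive by auto
next
  fix s and c c' :: real
  assume h: "\<forall>vv \<in> carrier_vec (dim_row (WW (fst s) (snd s))).
      c * (vv \<bullet> vv) \<le> vv \<bullet> (WW (fst s) (snd s) *\<^sub>v vv)"
    and "0 < c'" "c' \<le> c"
  show "\<forall>vv \<in> carrier_vec (dim_row (WW (fst s) (snd s))).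
      c' * (vv \<bullet> vv) \<le> vv \<bullet> (WW (fst s) (snd s) *\<^sub>v vv)"
  proof
    fix vv :: "real vec" assume vv: "vv \<in> carrier_vec (dim_row (WW (fst s) (snd s)))"
    have "c' * (vv \<bullet> vv) \<le> c * (vv \<bullet> vv)" using \<open>c' \<le> c\<close> sp_self_nonneg by (rule mult_right_mono)
    also have "\<dots> \<le> vv \<bullet> (WW (fst s) (snd s) *\<^sub>v vv)" using h vv by blast
    finally show "c' * (vv \<bullet> vv) \<le> vv \<bullet> (WW (fst s) (snd s) *\<^sub>v vv)" .
  qed
qed


lemma pj_facts:
  assumes p: "1 \<le> p" "p \<le> r" and j: "j \<in> Jset ny"
  shows "K p \<in> carrier_mat nu ny" "L p j \<in> carrier_mat ny ny" "M p j \<in> carrier_mat ny ny"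
    "N p j \<in> carrier_mat ny ny" "Z p j \<in> carrier_mat ny ny"
    "sym_mat (four_block_mat (L p j) (N p j) (transpose_mat (N p j)) (M p j))"
    "nonneg_mat (four_block_mat (L p j) (N p j) (transpose_mat (N p j)) (M p j))"
  using K_dim LMN_dim LMN_sym_nonneg p j by auto

lemma traj_carriers:
  assumes tr: "cl_traj nx nu ny nw A B C D Dl r K lam dl w yinit x u yh Ev"
  shows "x k \<in> carrier_vec nx" "w k \<in> carrier_vec nw" "u k \<in> carrier_vec nu" "yh k \<in> carrier_vec ny"
    "x (Suc k) = A *\<^sub>v x k + B *\<^sub>v u k"
  using tr unfolding cl_traj_def by auto

lemma step_full:
  assumes c: "0 < c"
    and co: "\<forall>pj\<in>{1..r} \<times> Jset ny. \<forall>vv\<in>carrier_vec (dim_row (WW (fst pj) (snd pj))).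
        c * (vv \<bullet> vv) \<le> vv \<bullet> (WW (fst pj) (snd pj) *\<^sub>v vv)"
    and tr: "cl_traj nx nu ny nw A B C D Dl r K lam (\<lambda>_. 0) w yinit x u yh Ev"
  shows "x (Suc k) \<bullet> (P *\<^sub>v x (Suc k)) + (F *\<^sub>v x k) \<bullet> (F *\<^sub>v x k) + c * (x k \<bullet> x k)
     \<le> sigma^2 * (x k \<bullet> (P *\<^sub>v x k)) + gamma^2 * (w k \<bullet> w k)"
proof -
  obtain p where p: "1 \<le> p" "p \<le> r" "u k = K p *\<^sub>v yh k" "0 \<le> Dl p"
    and sec: "\<forall>i<ny. \<bar>yh k $ i - (C *\<^sub>v x k + D *\<^sub>v w k) $ i\<bar> \<le> Dl p * lam i * \<bar>(C *\<^sub>v x k + D *\<^sub>v w k) $ i\<bar> + 0"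
    using traj_step[OF tr, of k] by auto
  note cr = traj_carriers[OF tr, of k]
  define y where "y = C *\<^sub>v x k + D *\<^sub>v w k"
  define e where "e = yh k - y"
  have y: "y \<in> carrier_vec ny" unfolding y_def using C_dim D_dim cr by auto
  have e: "e \<in> carrier_vec ny" unfolding e_def using y cr by auto
  have yh: "yh k = C *\<^sub>v x k + (D *\<^sub>v w k + e)"
  proof -
    have "yh k = y + e" unfolding e_def using vec_add_diff[OF y cr(4)] by simp
    moreover have "C *\<^sub>v x k \<in> carrier_vec ny" "D *\<^sub>v w k \<in> carrier_vec ny" using C_dim D_dim cr by auto
    ultimately show ?thesis unfolding y_def using assoc_add_vec e by metis
  qed
  obtain j where j: "j \<in> Jset ny" "\<forall>i<ny. j ! i * y $ i = \<bar>y $ i\<bar>" using sign_list by blast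
  note pf = pj_facts[OF p(1,2) j(1)]
  have pj: "(p, j) \<in> {1..r} \<times> Jset ny" using p j by auto
  have coer: "\<forall>vv\<in>carrier_vec (dim_row (WW p j)). c * (vv \<bullet> vv) \<le> vv \<bullet> (WW p j *\<^sub>v vv)"
    using co pj by fastforce
  have BK: "B * K p \<in> carrier_mat nx ny" using B_dim pf by simp
  have xs: "x (Suc k) = (A + B * K p * C) *\<^sub>v x k + (B * K p * D) *\<^sub>v w k + (B * K p) *\<^sub>v e"
  proof -
    have "x (Suc k) = A *\<^sub>v x k + B *\<^sub>v (K p *\<^sub>v (C *\<^sub>v x k + (D *\<^sub>v w k + e)))"
      using cr p yh by simp
    also have "\<dots> = (A + B * K p * C) *\<^sub>v x k + (B * K p) *\<^sub>v (D *\<^sub>v w k + e)"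
      using A_dim B_dim pf C_dim D_dim cr e by (intro dyn_eq) auto
    also have "(B * K p) *\<^sub>v (D *\<^sub>v w k + e) = (B * K p * D) *\<^sub>v w k + (B * K p) *\<^sub>v e"
    proof -
      have "(B * K p) *\<^sub>v (D *\<^sub>v w k + e) = (B * K p) *\<^sub>v (D *\<^sub>v w k) + (B * K p) *\<^sub>v e"
        using BK D_dim cr e by (intro mult_add_distrib_mat_vec[OF BK]) auto
      moreover have "(B * K p * D) *\<^sub>v w k = (B * K p) *\<^sub>v (D *\<^sub>v w k)"
        using BK D_dim cr by (intro assoc_mult_mat_vec) auto
      ultimately show ?thesis by simp
    qed
    also have "(A + B * K p * C) *\<^sub>v x k + ((B * K p * D) *\<^sub>v w k + (B * K p) *\<^sub>v e)
        = (A + B * K p * C) *\<^sub>v x k + (B * K p * D) *\<^sub>v w k + (B * K p) *\<^sub>v e"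
    proof -
      have M1: "A + B * K p * C \<in> carrier_mat nx nx" by (rule add_carrier_mat[OF mult_carrier_mat[OF BK C_dim]])
      have M2: "B * K p * D \<in> carrier_mat nx nw" by (rule mult_carrier_mat[OF BK D_dim])
      have c3: "(A + B * K p * C) *\<^sub>v x k \<in> carrier_vec nx" "(B * K p * D) *\<^sub>v w k \<in> carrier_vec nx"
        "(B * K p) *\<^sub>v e \<in> carrier_vec nx"
        by (rule mult_mat_vec_carrier[OF M1 cr(1)], rule mult_mat_vec_carrier[OF M2 cr(2)], rule mult_mat_vec_carrier[OF BK e])
      show ?thesis by (rule assoc_add_vec[OF c3, symmetric])
    qed
    finally show ?thesis .
  qed
  have sector: "\<forall>i<ny. \<bar>e $ i\<bar> \<le> Dl p * lam i * \<bar>(C *\<^sub>v x k + D *\<^sub>v w k) $ i\<bar>"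
  proof (intro allI impI)
    fix i assume i: "i < ny"
    have "e $ i = yh k $ i - y $ i" unfolding e_def using y i by simp
    thus "\<bar>e $ i\<bar> \<le> Dl p * lam i * \<bar>(C *\<^sub>v x k + D *\<^sub>v w k) $ i\<bar>" using sec i unfolding y_def by simp
  qed
  have "x (Suc k) \<bullet> (P *\<^sub>v x (Suc k)) + (F *\<^sub>v x k) \<bullet> (F *\<^sub>v x k) + c * (x k \<bullet> x k)
     \<le> sigma^2 * (x k \<bullet> (P *\<^sub>v x k)) + gamma^2 * (w k \<bullet> w k)"
    unfolding xs
    by (rule step_core[OF A_dim B_dim C_dim D_dim F_dim P_dim pf(1-7) p(4) coer _ cr(1,2) e _ sector])
      (use c j(2) y_def in auto)
  thus ?thesis .
qed


lemma step_noise: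
  assumes c: "0 < c"
    and co: "\<forall>pj\<in>{1..r} \<times> Jset ny. \<forall>vv\<in>carrier_vec (dim_row (WW (fst pj) (snd pj))).
        c * (vv \<bullet> vv) \<le> vv \<bullet> (WW (fst pj) (snd pj) *\<^sub>v vv)"
    and tr: "cl_traj nx nu ny nw A B C D Dl r K lam del w yinit x u yh Ev"
  shows "\<exists>xh g p d. x (Suc k) = xh + g \<and> xh \<in> carrier_vec nx \<and> g \<in> carrier_vec nx
     \<and> xh \<bullet> (P *\<^sub>v xh) + c * (x k \<bullet> x k) \<le> sigma^2 * (x k \<bullet> (P *\<^sub>v x k))
     \<and> 1 \<le> p \<and> p \<le> r \<and> d \<in> carrier_vec ny \<and> g = (B * K p) *\<^sub>v d
     \<and> (\<forall>i<ny. \<bar>d $ i\<bar> \<le> (Dl p * lam i + 1) * \<bar>(D *\<^sub>v w k) $ i\<bar> + del i)"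
proof -
  obtain p where p: "1 \<le> p" "p \<le> r" "u k = K p *\<^sub>v yh k" "0 \<le> Dl p"
    and sec: "\<forall>i<ny. \<bar>yh k $ i - (C *\<^sub>v x k + D *\<^sub>v w k) $ i\<bar> \<le> Dl p * lam i * \<bar>(C *\<^sub>v x k + D *\<^sub>v w k) $ i\<bar> + del i"
    using traj_step[OF tr del_nonneg, of k] by auto
  note cr = traj_carriers[OF tr, of k]
  define cx where "cx = C *\<^sub>v x k"
  define dw where "dw = D *\<^sub>v w k"
  have cx: "cx \<in> carrier_vec ny" unfolding cx_def using C_dim cr by auto
  have dw: "dw \<in> carrier_vec ny" unfolding dw_def using D_dim cr by auto
  define al where "al = (\<lambda>i. Dl p * lam i * \<bar>cx $ i\<bar>)"
  define ee where "ee = (\<lambda>i. yh k $ i - cx $ i - dw $ i)"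
  define eb where "eb = vec ny (\<lambda>i. max (- al i) (min (al i) (ee i)))"
  define d where "d = vec ny (\<lambda>i. dw $ i + (ee i - eb $ i))"
  have eb: "eb \<in> carrier_vec ny" unfolding eb_def by simp
  have d: "d \<in> carrier_vec ny" unfolding d_def by simp
  have split: "\<bar>eb $ i\<bar> \<le> al i \<and> \<bar>ee i - eb $ i\<bar> \<le> Dl p * lam i * \<bar>dw $ i\<bar> + del i" if i: "i < ny" for i
  proof -
    have "0 < lam i" using lam_pos i by blast
    hence l0: "0 \<le> Dl p * lam i" using p(4) by simp
    have dd: "dim_vec (D *\<^sub>v w k) = ny" using D_dim by simp
    have sp: "(C *\<^sub>v x k + D *\<^sub>v w k) $ i = cx $ i + dw $ i" unfolding cx_def dw_def
      by (rule index_add_vec(1)) (use carrier_matD(1)[OF D_dim] i in simp)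
    have "\<bar>ee i\<bar> = \<bar>yh k $ i - (C *\<^sub>v x k + D *\<^sub>v w k) $ i\<bar>" unfolding ee_def sp by (simp add: algebra_simps)
    also have "\<dots> \<le> Dl p * lam i * \<bar>cx $ i + dw $ i\<bar> + del i" using sec[rule_format, OF i] by (simp only: sp)
    finally have "\<bar>ee i\<bar> \<le> Dl p * lam i * \<bar>cx $ i + dw $ i\<bar> + del i" .
    also have "\<dots> \<le> Dl p * lam i * (\<bar>cx $ i\<bar> + \<bar>dw $ i\<bar>) + del i"
      using mult_left_mono[OF abs_triangle_ineq l0] by simp
    finally have h1: "\<bar>ee i\<bar> \<le> al i + (Dl p * lam i * \<bar>dw $ i\<bar> + del i)"
      unfolding al_def by (simp add: algebra_simps)
    have h2: "0 \<le> al i" unfolding al_def using l0 by simp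
    have h3: "0 \<le> Dl p * lam i * \<bar>dw $ i\<bar> + del i" using l0 del_nonneg i by simp
    have ebi: "eb $ i = max (- al i) (min (al i) (ee i))" unfolding eb_def using i by simp
    show ?thesis unfolding ebi by (rule clamp_split[OF h1 h2 h3])
  qed
  have yh: "yh k = cx + (eb + d)"
  proof (rule eq_vecI)
    show "dim_vec (yh k) = dim_vec (cx + (eb + d))" using cr cx d by simp
    fix i assume "i < dim_vec (cx + (eb + d))"
    hence i: "i < ny" using cx d by simp
    have "(cx + (eb + d)) $ i = cx $ i + (eb $ i + d $ i)" using i cx eb d by simp
    also have "d $ i = dw $ i + (ee i - eb $ i)" using i unfolding d_def by simp
    finally show "yh k $ i = (cx + (eb + d)) $ i" unfolding ee_def by simp
  qed
  obtain j where j: "j \<in> Jset ny" "\<forall>i<ny. j ! i * cx $ i = \<bar>cx $ i\<bar>" using sign_list by blast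
  note pf = pj_facts[OF p(1,2) j(1)]
  have pj: "(p, j) \<in> {1..r} \<times> Jset ny" using p j by auto
  have coer: "\<forall>vv\<in>carrier_vec (dim_row (WW p j)). c * (vv \<bullet> vv) \<le> vv \<bullet> (WW p j *\<^sub>v vv)"
    using co pj by fastforce
  have BK: "B * K p \<in> carrier_mat nx ny" using B_dim pf by simp
  have M1: "A + B * K p * C \<in> carrier_mat nx nx" by (rule add_carrier_mat[OF mult_carrier_mat[OF BK C_dim]])
  have M2: "B * K p * D \<in> carrier_mat nx nw" by (rule mult_carrier_mat[OF BK D_dim])
  define xh where "xh = (A + B * K p * C) *\<^sub>v x k + (B * K p) *\<^sub>v eb"
  define g where "g = (B * K p) *\<^sub>v d"
  have xh: "xh \<in> carrier_vec nx" unfolding xh_def using M1 BK cr eb by simp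
  have g: "g \<in> carrier_vec nx" unfolding g_def using BK d by simp
  have xs: "x (Suc k) = xh + g"
  proof -
    have "x (Suc k) = A *\<^sub>v x k + B *\<^sub>v (K p *\<^sub>v (C *\<^sub>v x k + (eb + d)))"
      using cr p yh unfolding cx_def by simp
    also have "\<dots> = (A + B * K p * C) *\<^sub>v x k + (B * K p) *\<^sub>v (eb + d)"
      using A_dim B_dim pf C_dim cr eb d by (intro dyn_eq) auto
    also have "(B * K p) *\<^sub>v (eb + d) = (B * K p) *\<^sub>v eb + g"
      unfolding g_def by (rule mult_add_distrib_mat_vec[OF BK eb d])
    also have "(A + B * K p * C) *\<^sub>v x k + ((B * K p) *\<^sub>v eb + g) = xh + g"
    proof -
      have c3: "(A + B * K p * C) *\<^sub>v x k \<in> carrier_vec nx" "(B * K p) *\<^sub>v eb \<in> carrier_vec nx"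
        by (rule mult_mat_vec_carrier[OF M1 cr(1)], rule mult_mat_vec_carrier[OF BK eb])
      show ?thesis unfolding xh_def by (rule assoc_add_vec[OF c3 g, symmetric])
    qed
    finally show ?thesis .
  qed
  have w0: "0\<^sub>v nw \<in> carrier_vec nw" by simp
  have cw0: "C *\<^sub>v x k + D *\<^sub>v 0\<^sub>v nw = cx" unfolding cx_def using C_dim D_dim cr by simp
  have core: "((A + B * K p * C) *\<^sub>v x k + (B * K p * D) *\<^sub>v 0\<^sub>v nw + (B * K p) *\<^sub>v eb) \<bullet>
           (P *\<^sub>v ((A + B * K p * C) *\<^sub>v x k + (B * K p * D) *\<^sub>v 0\<^sub>v nw + (B * K p) *\<^sub>v eb))
         + (F *\<^sub>v x k) \<bullet> (F *\<^sub>v x k) + c * (x k \<bullet> x k)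
       \<le> sigma^2 * (x k \<bullet> (P *\<^sub>v x k)) + gamma^2 * (0\<^sub>v nw \<bullet> 0\<^sub>v nw)"
  proof (rule step_core[OF A_dim B_dim C_dim D_dim F_dim P_dim pf(1-7) p(4) coer _ cr(1) w0 eb])
    show "0 \<le> c" using c by simp
    show "\<forall>i<ny. j ! i * (C *\<^sub>v x k + D *\<^sub>v 0\<^sub>v nw) $ i = \<bar>(C *\<^sub>v x k + D *\<^sub>v 0\<^sub>v nw) $ i\<bar>"
      unfolding cw0 using j(2) by blast
    show "\<forall>i<ny. \<bar>eb $ i\<bar> \<le> Dl p * lam i * \<bar>(C *\<^sub>v x k + D *\<^sub>v 0\<^sub>v nw) $ i\<bar>"
      unfolding cw0 using split unfolding al_def by blast
  qed
  have z: "(B * K p * D) *\<^sub>v 0\<^sub>v nw = 0\<^sub>v nx" using M2 by simp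
  have "(A + B * K p * C) *\<^sub>v x k + (B * K p * D) *\<^sub>v 0\<^sub>v nw + (B * K p) *\<^sub>v eb = xh"
    unfolding z xh_def using M1 cr by simp
  with core have "xh \<bullet> (P *\<^sub>v xh) + (F *\<^sub>v x k) \<bullet> (F *\<^sub>v x k) + c * (x k \<bullet> x k) \<le> sigma^2 * (x k \<bullet> (P *\<^sub>v x k))"
    by simp
  moreover have "0 \<le> (F *\<^sub>v x k) \<bullet> (F *\<^sub>v x k)" by (rule sp_self_nonneg)
  ultimately have main: "xh \<bullet> (P *\<^sub>v xh) + c * (x k \<bullet> x k) \<le> sigma^2 * (x k \<bullet> (P *\<^sub>v x k))" by linarith
  have dbound: "\<forall>i<ny. \<bar>d $ i\<bar> \<le> (Dl p * lam i + 1) * \<bar>(D *\<^sub>v w k) $ i\<bar> + del i"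
  proof (intro allI impI)
    fix i assume i: "i < ny"
    have "\<bar>d $ i\<bar> \<le> \<bar>dw $ i\<bar> + \<bar>ee i - eb $ i\<bar>" unfolding d_def using i by (simp add: abs_triangle_ineq)
    also have "\<dots> \<le> \<bar>dw $ i\<bar> + (Dl p * lam i * \<bar>dw $ i\<bar> + del i)" using split[OF i] by simp
    finally show "\<bar>d $ i\<bar> \<le> (Dl p * lam i + 1) * \<bar>(D *\<^sub>v w k) $ i\<bar> + del i"
      unfolding dw_def by (simp add: algebra_simps)
  qed
  show ?thesis using xs xh g main p d dbound unfolding g_def by blast
qed

end

theorem theorem2:
  fixes nx nu ny nw nz r :: nat
    and A B C D F P :: "real mat"
    and K :: "nat \<Rightarrow> real mat"
    and Dl lam del :: "nat \<Rightarrow> real"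
    and L M N Z :: "nat \<Rightarrow> real list \<Rightarrow> real mat"
    and sigma gamma :: real
  assumes ny_pos: "0 < ny"
    and A_dim: "A \<in> carrier_mat nx nx" and B_dim: "B \<in> carrier_mat nx nu"
    and C_dim: "C \<in> carrier_mat ny nx" and D_dim: "D \<in> carrier_mat ny nw"
    and F_dim: "F \<in> carrier_mat nz nx"
    and r_pos: "1 \<le> r"
    and Dl_nonneg: "0 \<le> Dl 0"
    and Dl_incr: "\<forall>p < r. Dl p < Dl (Suc p)"
    and K_dim: "\<forall>p \<in> {1..r}. K p \<in> carrier_mat nu ny"
    and lam_pos: "\<forall>i < ny. 0 < lam i"
    and del_nonneg: "\<forall>i < ny. 0 \<le> del i"
    and sigma: "0 < sigma" "sigma \<le> 1"
    and gamma: "0 < gamma"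
    and P_dim: "P \<in> carrier_mat nx nx" and P_pd: "pos_def P"
    and LMN_dim: "\<forall>p \<in> {1..r}. \<forall>j \<in> Jset ny.
        L p j \<in> carrier_mat ny ny \<and> M p j \<in> carrier_mat ny ny \<and> N p j \<in> carrier_mat ny ny
        \<and> Z p j \<in> carrier_mat ny ny"
    and LMN_sym_nonneg: "\<forall>p \<in> {1..r}. \<forall>j \<in> Jset ny.
        sym_mat (four_block_mat (L p j) (N p j) (transpose_mat (N p j)) (M p j))
        \<and> nonneg_mat (four_block_mat (L p j) (N p j) (transpose_mat (N p j)) (M p j))"
    and Z_sym: "\<forall>p \<in> {1..r}. \<forall>j \<in> Jset ny. sym_mat (Z p j)"
    and LMI: "\<forall>p \<in> {1..r}. \<forall>j \<in> Jset ny.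
        pos_def (LMI_mat nx nu ny nw nz A B C D F (K p) (Dl p) (Lam ny lam j) sigma gamma P
                   (L p j) (M p j) (N p j) (Z p j))"
  shows
    \<comment> \<open>(i) practical stability with ultimate bound of the stated form\<close>
    "(\<exists>rho \<ge> 0. \<forall>wbar \<ge> 0. \<forall>w yinit x u yh Ev.
        cl_traj nx nu ny nw A B C D Dl r K lam del w yinit x u yh Ev
        \<and> (\<forall>k. vinf (w k) \<le> wbar) \<longrightarrow>
        limsup (\<lambda>k. ereal (vnorm (x k)))
          \<le> ereal (rho * Max ((\<lambda>i. (Dl r * lam i + 1) * wbar * minf D + del i) ` {..<ny})))
     \<and>
    \<comment> \<open>(ii) decay rate sigma (w = 0, delta = 0)\<close>
     (\<exists>Mc \<ge> 1. \<forall>w yinit x u yh Ev.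
        cl_traj nx nu ny nw A B C D Dl r K lam (\<lambda>_. 0) w yinit x u yh Ev
        \<and> (\<forall>k. w k = 0\<^sub>v nw) \<longrightarrow>
        (\<forall>k. vnorm (x k) \<le> Mc * sigma ^ k * vnorm (x 0)))
     \<and>
    \<comment> \<open>(iii) l2-gain from w to z = F x at most gamma (x[0] = 0, delta = 0)\<close>
     (\<forall>w yinit x u yh Ev.
        cl_traj nx nu ny nw A B C D Dl r K lam (\<lambda>_. 0) w yinit x u yh Ev
        \<and> x 0 = 0\<^sub>v nx \<and> in_l2 w \<longrightarrow>
        in_l2 (\<lambda>k. F *\<^sub>v x k) \<and> l2norm (\<lambda>k. F *\<^sub>v x k) \<le> gamma * l2norm w)"
proof -
  note hyps = assms
  obtain c where c: "0 < c"
    and co: "\<forall>pj\<in>{1..r} \<times> Jset ny. \<forall>vv\<in>carrier_vec (dim_row (LMI_mat nx nu ny nw nz A B C D F (K (fst pj)) (Dl (fst pj)) (Lam ny lam (snd pj)) sigma gamma P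
                   (L (fst pj) (snd pj)) (M (fst pj) (snd pj)) (N (fst pj) (snd pj)) (Z (fst pj) (snd pj)))).
        c * (vv \<bullet> vv) \<le> vv \<bullet> (LMI_mat nx nu ny nw nz A B C D F (K (fst pj)) (Dl (fst pj)) (Lam ny lam (snd pj)) sigma gamma P
                   (L (fst pj) (snd pj)) (M (fst pj) (snd pj)) (N (fst pj) (snd pj)) (Z (fst pj) (snd pj)) *\<^sub>v vv)"
    using coer_all[OF assms] by blast
  have dimP: "dim_row P = nx" using P_dim by simp
  obtain c1 where c1: "0 < c1" "\<forall>v\<in>carrier_vec nx. c1 * (v \<bullet> v) \<le> v \<bullet> (P *\<^sub>v v)"
    using pos_def_coercive[OF P_pd] unfolding dimP by blast
  obtain c2 where c2: "0 < c2" "\<forall>v\<in>carrier_vec nx. v \<bullet> (P *\<^sub>v v) \<le> c2 * (v \<bullet> v)"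
    using qf_upper[OF P_dim] by blast
  have Vnn: "0 \<le> v \<bullet> (P *\<^sub>v v)" if "v \<in> carrier_vec nx" for v
    by (rule qf_nonneg[OF P_pd P_dim that])
  have s21: "sigma^2 \<le> 1" using sigma by (simp add: power_le_one)
  show ?thesis
  proof (intro conjI)
    show "\<exists>rho \<ge> 0. \<forall>wbar \<ge> 0. \<forall>w yinit x u yh Ev.
        cl_traj nx nu ny nw A B C D Dl r K lam del w yinit x u yh Ev
        \<and> (\<forall>k. vinf (w k) \<le> wbar) \<longrightarrow>
        limsup (\<lambda>k. ereal (vnorm (x k)))
          \<le> ereal (rho * Max ((\<lambda>i. (Dl r * lam i + 1) * wbar * minf D + del i) ` {..<ny}))"
    proof -
      define kap where "kap = (\<Sum>p\<in>{1..r}. \<Sum>i<nx. \<Sum>j<ny. \<bar>(B * K p) $$ (i,j)\<bar>)"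
      have kapp: "(\<Sum>i<nx. \<Sum>j<ny. \<bar>(B * K p) $$ (i,j)\<bar>) \<le> kap" if "p \<in> {1..r}" for p
        unfolding kap_def using that
        by (intro member_le_sum[where f = "\<lambda>p. \<Sum>i<nx. \<Sum>j<ny. \<bar>(B * K p) $$ (i,j)\<bar>"]) (auto intro: sum_nonneg)
      have kap0: "0 \<le> kap" unfolding kap_def by (intro sum_nonneg) auto
      define mv where "mv = max 0 (1 - c / c2)"
      define nv where "nv = sqrt mv"
      have mu0: "0 \<le> mv" unfolding mv_def by simp
      have mu1: "mv < 1" unfolding mv_def using c c2 by simp
      have nu0: "0 \<le> nv" unfolding nv_def using mu0 by simp
      have nu1: "nv < 1" unfolding nv_def using mu0 mu1 by simp
      define rho where "rho = sqrt c2 * kap / ((1 - nv) * sqrt c1)"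
      have rho0: "0 \<le> rho" unfolding rho_def using c1 c2 kap0 nu1 by simp
      have Dlr: "Dl p \<le> Dl r" "0 \<le> Dl p" if "p \<le> r" for p
        using Dl_mono[OF assms, of p r] Dl_mono[OF assms, of 0 p] that Dl_nonneg by auto
      show ?thesis
      proof (intro exI[of _ rho] conjI allI impI rho0)
        fix wbar :: real and w yinit x u yh Ev
        assume wbar: "0 \<le> wbar"
          and h: "cl_traj nx nu ny nw A B C D Dl r K lam del w yinit x u yh Ev \<and> (\<forall>k. vinf (w k) \<le> wbar)"
        hence tr: "cl_traj nx nu ny nw A B C D Dl r K lam del w yinit x u yh Ev"
          and wb: "\<forall>k. vinf (w k) \<le> wbar" by auto
        note cr = traj_carriers[OF assms tr]
        define m where "m = Max ((\<lambda>i. (Dl r * lam i + 1) * wbar * minf D + del i) ` {..<ny})"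
        have mi: "(Dl r * lam i + 1) * wbar * minf D + del i \<le> m" if "i < ny" for i
          unfolding m_def using that by (intro Max_ge) auto
        have minf0: "0 \<le> minf D" using minf_bound(2)[OF D_dim cr(2)[of 0] ny_pos] .
        have Dr0: "0 \<le> Dl r" using Dlr[of r] by simp
        have m0: "0 \<le> m"
        proof -
          have "0 \<le> (Dl r * lam 0 + 1) * wbar * minf D + del 0"
            using Dr0 lam_pos ny_pos wbar minf0 del_nonneg by (simp add: less_imp_le)
          thus ?thesis using mi[OF ny_pos] by linarith
        qed
        define q where "q = (\<lambda>k. sqrt (x k \<bullet> (P *\<^sub>v x k)))"
        define bet where "bet = sqrt c2 * kap * m"
        have bet0: "0 \<le> bet" unfolding bet_def using c2 kap0 m0 by simp
        have qstep: "q (Suc k) \<le> nv * q k + bet" for k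
        proof -
          obtain xh g p d where sn: "x (Suc k) = xh + g" "xh \<in> carrier_vec nx" "g \<in> carrier_vec nx"
            "xh \<bullet> (P *\<^sub>v xh) + c * (x k \<bullet> x k) \<le> sigma^2 * (x k \<bullet> (P *\<^sub>v x k))"
            "1 \<le> p" "p \<le> r" "d \<in> carrier_vec ny" "g = (B * K p) *\<^sub>v d"
            "\<forall>i<ny. \<bar>d $ i\<bar> \<le> (Dl p * lam i + 1) * \<bar>(D *\<^sub>v w k) $ i\<bar> + del i"
            using step_noise[OF assms c co tr, of k] by blast
          define V where "V = x k \<bullet> (P *\<^sub>v x k)"
          have V0: "0 \<le> V" unfolding V_def using Vnn[OF cr(1)] .
          have Vc2: "V \<le> c2 * (x k \<bullet> x k)" unfolding V_def using c2 cr(1) by blast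
          have "sigma^2 * V \<le> V" using s21 V0 by (simp add: mult_left_le_one_le)
          hence "xh \<bullet> (P *\<^sub>v xh) \<le> V - c * (x k \<bullet> x k)"
            using sn(4) unfolding V_def[symmetric] by linarith
          also have "c * (x k \<bullet> x k) \<ge> (c / c2) * V"
          proof -
            have "(c / c2) * V \<le> (c / c2) * (c2 * (x k \<bullet> x k))" using Vc2 c c2 by (intro mult_left_mono) auto
            also have "\<dots> = c * (x k \<bullet> x k)" using c2 by simp
            finally show ?thesis .
          qed
          hence "V - c * (x k \<bullet> x k) \<le> (1 - c / c2) * V" by (simp add: algebra_simps)
          also have "\<dots> \<le> mv * V" unfolding mv_def using V0 by (intro mult_right_mono) auto
          finally have xhV: "xh \<bullet> (P *\<^sub>v xh) \<le> mv * V" .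
          have q1: "sqrt (xh \<bullet> (P *\<^sub>v xh)) \<le> nv * q k"
          proof -
            have "sqrt (xh \<bullet> (P *\<^sub>v xh)) \<le> sqrt (mv * V)" using xhV by (rule real_sqrt_le_mono)
            thus ?thesis unfolding nv_def q_def V_def by (simp add: real_sqrt_mult)
          qed
          have BK: "B * K p \<in> carrier_mat nx ny" using B_dim K_dim sn(5,6) by auto
          have dm: "\<forall>j<ny. \<bar>d $ j\<bar> \<le> m"
          proof (intro allI impI)
            fix j assume j: "j < ny"
            have dw: "\<bar>(D *\<^sub>v w k) $ j\<bar> \<le> minf D * wbar"
            proof -
              have "\<bar>(D *\<^sub>v w k) $ j\<bar> \<le> minf D * vinf (w k)" by (rule minf_bound(1)[OF D_dim cr(2) j])
              also have "\<dots> \<le> minf D * wbar" using wb minf0 by (intro mult_left_mono) auto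
              finally show ?thesis .
            qed
            have l: "0 \<le> lam j" using lam_pos j by (simp add: less_imp_le)
            have "(Dl p * lam j + 1) \<le> (Dl r * lam j + 1)" using Dlr(1)[OF sn(6)] l by (simp add: mult_right_mono)
            moreover have "0 \<le> Dl p * lam j + 1" using Dlr(2)[OF sn(6)] l by simp
            ultimately have "(Dl p * lam j + 1) * \<bar>(D *\<^sub>v w k) $ j\<bar> \<le> (Dl r * lam j + 1) * (minf D * wbar)"
              using dw by (intro mult_mono) auto
            hence "\<bar>d $ j\<bar> \<le> (Dl r * lam j + 1) * (minf D * wbar) + del j" using sn(9) j by fastforce
            also have "\<dots> \<le> m" using mi[OF j] by (simp add: algebra_simps)
            finally show "\<bar>d $ j\<bar> \<le> m" .
          qed
          have "vnorm g \<le> (\<Sum>i<nx. \<Sum>j<ny. \<bar>(B * K p) $$ (i,j)\<bar>) * m"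
            unfolding sn(8) by (rule vnorm_mult_bound[OF BK sn(7) dm])
          also have "\<dots> \<le> kap * m" using kapp[of p] sn(5,6) m0 by (intro mult_right_mono) auto
          finally have gk: "vnorm g \<le> kap * m" .
          have q2: "sqrt (g \<bullet> (P *\<^sub>v g)) \<le> bet"
          proof -
            have "sqrt (g \<bullet> (P *\<^sub>v g)) \<le> sqrt (c2 * (g \<bullet> g))" using c2 sn(3) by (intro real_sqrt_le_mono) blast
            also have "\<dots> = sqrt c2 * vnorm g" by (simp add: vnorm_sp real_sqrt_mult)
            also have "\<dots> \<le> sqrt c2 * (kap * m)" using gk c2 by (intro mult_left_mono) auto
            finally show ?thesis unfolding bet_def by (simp add: mult.assoc)
          qed
          have "q (Suc k) \<le> sqrt (xh \<bullet> (P *\<^sub>v xh)) + sqrt (g \<bullet> (P *\<^sub>v g))"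
            unfolding q_def sn(1) by (rule qf_triangle[OF P_pd P_dim sn(2,3)])
          thus ?thesis using q1 q2 by linarith
        qed
        have qb: "q k \<le> nv^k * q 0 + bet / (1 - nv)" for k
        proof (induction k)
          case 0 thus ?case using bet0 nu1 by simp
        next
          case (Suc k)
          have "q (Suc k) \<le> nv * q k + bet" by (rule qstep)
          also have "\<dots> \<le> nv * (nv^k * q 0 + bet / (1 - nv)) + bet" using Suc nu0 by (intro add_right_mono mult_left_mono) auto
          also have "\<dots> = nv^(Suc k) * q 0 + bet / (1 - nv)" using nu1 by (simp add: field_simps)
          finally show ?case .
        qed
        have xb: "vnorm (x k) \<le> (q 0 / sqrt c1) * nv^k + rho * m" for k
        proof -
          have "c1 * (x k \<bullet> x k) \<le> x k \<bullet> (P *\<^sub>v x k)" using c1 cr(1) by blast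
          hence "x k \<bullet> x k \<le> (x k \<bullet> (P *\<^sub>v x k)) / c1" using c1 by (simp add: field_simps)
          hence "vnorm (x k) \<le> sqrt ((x k \<bullet> (P *\<^sub>v x k)) / c1)" unfolding vnorm_sp by (rule real_sqrt_le_mono)
          also have "\<dots> = q k / sqrt c1" unfolding q_def by (simp add: real_sqrt_divide)
          also have "\<dots> \<le> (nv^k * q 0 + bet / (1 - nv)) / sqrt c1" using qb[of k] c1 by (simp add: divide_right_mono)
          also have "\<dots> = (q 0 / sqrt c1) * nv^k + rho * m"
          proof -
            have gen: "(nv^k * q 0 + bet / (1 - nv)) / s = (q 0 / s) * nv^k + (sqrt c2 * kap / ((1 - nv) * s)) * m"
              if "s > 0" for s using nu1 that unfolding bet_def by (simp add: field_simps)
            show ?thesis unfolding rho_def using gen[of "sqrt c1"] c1 by simp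
          qed
          finally show ?thesis .
        qed
        have lim: "(\<lambda>k. ereal ((q 0 / sqrt c1) * nv^k + rho * m)) \<longlonglongrightarrow> ereal ((q 0 / sqrt c1) * 0 + rho * m)"
          using nu0 nu1 by (intro tendsto_ereal tendsto_intros) auto
        have "limsup (\<lambda>k. ereal (vnorm (x k))) \<le> limsup (\<lambda>k. ereal ((q 0 / sqrt c1) * nv^k + rho * m))"
          by (intro Limsup_mono always_eventually) (use xb in simp)
        also have "\<dots> = ereal (rho * m)" using lim_imp_Limsup[OF trivial_limit_sequentially lim] by simp
        finally show "limsup (\<lambda>k. ereal (vnorm (x k)))
          \<le> ereal (rho * Max ((\<lambda>i. (Dl r * lam i + 1) * wbar * minf D + del i) ` {..<ny}))"
          unfolding m_def .
      qed
    qed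
  next
    show "\<exists>Mc \<ge> 1. \<forall>w yinit x u yh Ev.
        cl_traj nx nu ny nw A B C D Dl r K lam (\<lambda>_. 0) w yinit x u yh Ev
        \<and> (\<forall>k. w k = 0\<^sub>v nw) \<longrightarrow>
        (\<forall>k. vnorm (x k) \<le> Mc * sigma ^ k * vnorm (x 0))"
    proof (intro exI[of _ "max 1 (sqrt (c2 / c1))"] conjI allI impI)
      show "1 \<le> max 1 (sqrt (c2 / c1))" by simp
      fix w yinit x u yh Ev k
      assume h: "cl_traj nx nu ny nw A B C D Dl r K lam (\<lambda>_. 0) w yinit x u yh Ev \<and> (\<forall>k. w k = 0\<^sub>v nw)"
      hence tr: "cl_traj nx nu ny nw A B C D Dl r K lam (\<lambda>_. 0) w yinit x u yh Ev" and w0: "\<forall>k. w k = 0\<^sub>v nw" by auto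
      note cr = traj_carriers[OF assms tr]
      have step: "x (Suc k) \<bullet> (P *\<^sub>v x (Suc k)) \<le> sigma^2 * (x k \<bullet> (P *\<^sub>v x k))" for k
      proof -
        have "x (Suc k) \<bullet> (P *\<^sub>v x (Suc k)) + (F *\<^sub>v x k) \<bullet> (F *\<^sub>v x k) + c * (x k \<bullet> x k)
            \<le> sigma^2 * (x k \<bullet> (P *\<^sub>v x k)) + gamma^2 * (w k \<bullet> w k)"
          by (rule step_full[OF assms c co tr])
        moreover have "gamma^2 * (w k \<bullet> w k) = 0" using w0 by simp
        moreover have "0 \<le> (F *\<^sub>v x k) \<bullet> (F *\<^sub>v x k)" by (rule sp_self_nonneg)
        moreover have "0 \<le> c * (x k \<bullet> x k)" using c sp_self_nonneg by simp
        ultimately show ?thesis by linarith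
      qed
      have decay: "x k \<bullet> (P *\<^sub>v x k) \<le> (sigma^2)^k * (x 0 \<bullet> (P *\<^sub>v x 0))" for k
      proof (induction k)
        case 0 thus ?case by simp
      next
        case (Suc k)
        have "x (Suc k) \<bullet> (P *\<^sub>v x (Suc k)) \<le> sigma^2 * (x k \<bullet> (P *\<^sub>v x k))" by (rule step)
        also have "\<dots> \<le> sigma^2 * ((sigma^2)^k * (x 0 \<bullet> (P *\<^sub>v x 0)))"
          using Suc by (intro mult_left_mono) auto
        finally show ?case by (simp add: mult.assoc)
      qed
      have "c1 * (x k \<bullet> x k) \<le> (sigma^2)^k * (c2 * (x 0 \<bullet> x 0))"
      proof -
        have "c1 * (x k \<bullet> x k) \<le> x k \<bullet> (P *\<^sub>v x k)" using c1 cr(1) by blast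
        also have "\<dots> \<le> (sigma^2)^k * (x 0 \<bullet> (P *\<^sub>v x 0))" by (rule decay)
        also have "\<dots> \<le> (sigma^2)^k * (c2 * (x 0 \<bullet> x 0))"
          using c2 cr(1)[of 0] by (intro mult_left_mono) auto
        finally show ?thesis .
      qed
      hence "x k \<bullet> x k \<le> (sqrt (c2 / c1) * sigma ^ k * vnorm (x 0))^2"
        using c1 c2 unfolding vnorm_sp
        by (simp add: power_mult_distrib sp_self_nonneg field_simps power_mult[symmetric] mult.commute)
      hence "vnorm (x k) \<le> sqrt ((sqrt (c2 / c1) * sigma ^ k * vnorm (x 0))^2)"
        unfolding vnorm_sp by (rule real_sqrt_le_mono)
      also have "\<dots> = sqrt (c2 / c1) * sigma ^ k * vnorm (x 0)"
      proof -
        have "0 \<le> sqrt (c2 / c1) * sigma ^ k * vnorm (x 0)"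
          using sigma c1 c2 by (simp add: vnorm_sp sp_self_nonneg)
        thus ?thesis by simp
      qed
      also have "\<dots> \<le> max 1 (sqrt (c2 / c1)) * sigma ^ k * vnorm (x 0)"
        using sigma by (intro mult_right_mono) (auto simp: vnorm_def sum_nonneg)
      finally show "vnorm (x k) \<le> max 1 (sqrt (c2 / c1)) * sigma ^ k * vnorm (x 0)" .
    qed
  next
    show "\<forall>w yinit x u yh Ev.
        cl_traj nx nu ny nw A B C D Dl r K lam (\<lambda>_. 0) w yinit x u yh Ev
        \<and> x 0 = 0\<^sub>v nx \<and> in_l2 w \<longrightarrow>
        in_l2 (\<lambda>k. F *\<^sub>v x k) \<and> l2norm (\<lambda>k. F *\<^sub>v x k) \<le> gamma * l2norm w"
    proof (intro allI impI)
      fix w yinit x u yh Ev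
      assume h: "cl_traj nx nu ny nw A B C D Dl r K lam (\<lambda>_. 0) w yinit x u yh Ev \<and> x 0 = 0\<^sub>v nx \<and> in_l2 w"
      hence tr: "cl_traj nx nu ny nw A B C D Dl r K lam (\<lambda>_. 0) w yinit x u yh Ev"
        and x0: "x 0 = 0\<^sub>v nx" and wl2: "summable (\<lambda>k. (vnorm (w k))^2)" unfolding in_l2_def by auto
      note cr = traj_carriers[OF assms tr]
      have sq: "(vnorm v)^2 = v \<bullet> v" for v unfolding vnorm_sp using sp_self_nonneg by simp
      define zz where "zz = (\<lambda>k. (vnorm (F *\<^sub>v x k))^2)"
      define ww where "ww = (\<lambda>k. (vnorm (w k))^2)"
      have step: "x (Suc k) \<bullet> (P *\<^sub>v x (Suc k)) + zz k \<le> x k \<bullet> (P *\<^sub>v x k) + gamma^2 * ww k" for k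
      proof -
        have "x (Suc k) \<bullet> (P *\<^sub>v x (Suc k)) + (F *\<^sub>v x k) \<bullet> (F *\<^sub>v x k) + c * (x k \<bullet> x k)
            \<le> sigma^2 * (x k \<bullet> (P *\<^sub>v x k)) + gamma^2 * (w k \<bullet> w k)"
          by (rule step_full[OF assms c co tr])
        moreover have "sigma^2 * (x k \<bullet> (P *\<^sub>v x k)) \<le> x k \<bullet> (P *\<^sub>v x k)"
          using s21 Vnn[OF cr(1)] by (simp add: mult_left_le_one_le)
        moreover have "0 \<le> c * (x k \<bullet> x k)" using c sp_self_nonneg by simp
        ultimately show ?thesis unfolding zz_def ww_def sq by linarith
      qed
      have acc: "x n \<bullet> (P *\<^sub>v x n) + (\<Sum>k<n. zz k) \<le> gamma^2 * (\<Sum>k<n. ww k)" for n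
      proof (induction n)
        case 0 thus ?case using x0 P_dim by simp
      next
        case (Suc n)
        thus ?case using step[of n] by (simp add: algebra_simps)
      qed
      have zz0: "0 \<le> zz k" for k unfolding zz_def by simp
      have ww0: "0 \<le> ww k" for k unfolding ww_def by simp
      have wsum: "summable ww" using wl2 unfolding ww_def .
      have bnd: "(\<Sum>k<n. zz k) \<le> gamma^2 * suminf ww" for n
      proof -
        have "(\<Sum>k<n. zz k) \<le> gamma^2 * (\<Sum>k<n. ww k)" using acc[of n] Vnn[OF cr(1)[of n]] by linarith
        also have "\<dots> \<le> gamma^2 * suminf ww"
          using wsum ww0 by (intro mult_left_mono sum_le_suminf) auto
        finally show ?thesis .
      qed
      have zsum: "summable zz" by (rule summableI_nonneg_bounded[OF zz0 bnd])
      have zle: "suminf zz \<le> gamma^2 * suminf ww" by (rule suminf_le_const[OF zsum bnd])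
      have "l2norm (\<lambda>k. F *\<^sub>v x k) = sqrt (suminf zz)" unfolding l2norm_def zz_def ..
      also have "\<dots> \<le> sqrt (gamma^2 * suminf ww)" using zle by (rule real_sqrt_le_mono)
      also have "\<dots> = gamma * l2norm w" unfolding l2norm_def ww_def using gamma by (simp add: real_sqrt_mult)
      finally show "in_l2 (\<lambda>k. F *\<^sub>v x k) \<and> l2norm (\<lambda>k. F *\<^sub>v x k) \<le> gamma * l2norm w"
        using zsum unfolding in_l2_def zz_def by simp
    qed
  qed
qed

end
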